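(* Let $n \ge 2$ and let $\lambda = a_1\omega_1 + \cdots + a_{2n-1}\omega_{2n-1}$ ($a_i \in \mathbb{Z}_{\ge 0}$) be a dominant weight of $\mathfrak{sl}(2n,\mathbb{C})$, and assume that either $n = 2$ or $\lambda = a_1\omega_1 + a_2\omega_2 + a_3\omega_3$. Let $\nu = b_1\omega_1 + \cdots + b_n\omega_n$ ($b_i \in \mathbb{Z}_{\ge 0}$). Then there is a bijection $$\operatorname{domres}(\lambda,\nu) \;\longleftrightarrow\; \bigcup_{\substack{\eta \text{ dominant},\ \text{shape of } \eta \subseteq \text{shape of } \lambda,\\ \text{shape of } \eta \text{ even}}} \operatorname{LR}(\lambda/\eta,\nu).$$
   Context: $\omega_i$ are the fundamental weights of $\mathfrak{sl}(2n,\mathbb{C})$, $\varepsilon_i$ ($1\le i\le 2n$) the standard weights with $\varepsilon_i(\operatorname{diag}(a_1,\dots,a_{2n}))=a_i$. The shape of a dominant weight $\mu=\sum c_i\omega_i$ is the Young diagram (left- and top-justified) with $c_i$ columns of length $i$, longer columns to the left; containment is as diagrams aligned at top-left corners; a shape is even if all its columns have even length. Let $\mathfrak{g}^\sigma \cong \mathfrak{sp}(2n,\mathbb{C})$ be the fixed points of the automorphism $\sigma$ of $\mathfrak{sl}(2n,\mathbb{C})$ induced by the folding $i \mapsto 2n-i$ of the $A_{2n-1}$ Dynkin diagram, with Cartan subalgebra $\mathfrak{h}^\sigma$ (the $\sigma$-fixed diagonal matrices). Set $\hat\varepsilon_i = \varepsilon_i|_{\mathfrak{h}^\sigma}$, so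 $\hat\varepsilon_{2n+1-i} = -\hat\varepsilon_i$; the fundamental weights of $\mathfrak{g}^\sigma$ are $\hat\omega_i = \hat\varepsilon_1+\cdots+\hat\varepsilon_i$, and $\hat\nu := b_1\hat\omega_1+\cdots+b_n\hat\omega_n$. Semi-standard Young tableaux of the shape of $\lambda$ have entries in $\{1,\dots,2n\}$, rows weakly increasing left to right, columns strictly increasing downward; the word of a tableau reads rows right to left, top row first. $\operatorname{domres}(\lambda)$ is the set of such tableaux $\mathscr{T}$ with word $w_1\cdots w_k$ such that for every prefix $w_1\cdots w_j$, writing $\sum_{l\le j}\hat\varepsilon_{w_l} = \sum_{i=1}^n c_i\hat\varepsilon_i$, one has $c_1\ge\cdots\ge c_n\ge 0$. $\operatorname{domres}(\lambda,\nu)$ is the set of $\mathscr{T}\in\operatorname{domres}(\lambda)$ with $\sum_{l=1}^k \hat\varepsilon_{w_l} = \hat\nu$. For dominant $\eta$ with shape contained in that of $\lambda$, $\operatorname{LR}(\lambda/\eta,\nu)$ is the set of fillings of the boxes of the shape of $\lambda$ not in the shape of $\eta$ with letters from $\{1,\dots,2n\}$, rows weakly increasing, columns strictly increasing, whose word (rows read right to left, top to bottom, ignoring empty boxes) is dominant (in every prefix the number of letters $i$ is at least the number of letters $i+1$, for all $i$) and has weight $\nu$ (the number of entries equal to $i$ equals the number of boxes in row $i$ of the shape of $\nu$). *)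

theory Defs
  imports Main
begin

text \<open>A dominant weight of sl(2n) is given by its coefficient function
  a :: nat \<Rightarrow> nat (coefficient of omega_i is a i, only i in 1..2n-1 is used).
  Boxes of Young diagrams are pairs (row, column), both 1-indexed.\<close>

definition row_len :: "nat \<Rightarrow> (nat \<Rightarrow> nat) \<Rightarrow> nat \<Rightarrow> nat" where
  "row_len n a r = (\<Sum>i\<in>{r..2*n-1}. a i)"

text \<open>Shape: c_i columns of length i, longer columns to the left; row r (1 \<le> r) has
  length a_r + ... + a_{2n-1}.\<close>
definition shape :: "nat \<Rightarrow> (nat \<Rightarrow> nat) \<Rightarrow> (nat \<times> nat) set" where
  "shape n a = {(r, c). 1 \<le> r \<and> r \<le> 2*n-1 \<and> 1 \<le> c \<and> c \<le> row_len n a r}"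

definition ss_filling :: "nat \<Rightarrow> (nat \<times> nat) set \<Rightarrow> (nat \<times> nat \<Rightarrow> nat) \<Rightarrow> bool" where
  "ss_filling n B T \<longleftrightarrow>
     (\<forall>x. x \<notin> B \<longrightarrow> T x = 0) \<and>
     (\<forall>x\<in>B. 1 \<le> T x \<and> T x \<le> 2*n) \<and>
     (\<forall>r c c'. (r, c) \<in> B \<longrightarrow> (r, c') \<in> B \<longrightarrow> c \<le> c' \<longrightarrow> T (r, c) \<le> T (r, c')) \<and>
     (\<forall>r r' c. (r, c) \<in> B \<longrightarrow> (r', c) \<in> B \<longrightarrow> r < r' \<longrightarrow> T (r, c) < T (r', c))"

definition reading_word :: "nat \<Rightarrow> nat \<Rightarrow> (nat \<times> nat) set \<Rightarrow> (nat \<times> nat \<Rightarrow> nat) \<Rightarrow> nat list" where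
  "reading_word R C B T =
     concat (map (\<lambda>r. map (\<lambda>c. T (r, c)) (filter (\<lambda>c. (r, c) \<in> B) (rev [1..<C+1]))) [1..<R+1])"

definition word_of :: "nat \<Rightarrow> (nat \<Rightarrow> nat) \<Rightarrow> (nat \<times> nat) set \<Rightarrow> (nat \<times> nat \<Rightarrow> nat) \<Rightarrow> nat list" where
  "word_of n a B T = reading_word (2*n-1) (row_len n a 1) B T"

text \<open>Coefficient c_i of hat-epsilon_i in the sum of hat-epsilon_{w_l} over a word,
  using hat-epsilon_{2n+1-i} = - hat-epsilon_i.\<close>
definition hat_coef :: "nat \<Rightarrow> nat list \<Rightarrow> nat \<Rightarrow> int" where
  "hat_coef n w i = int (count_list w i) - int (count_list w (2*n+1-i))"

definition domres :: "nat \<Rightarrow> (nat \<Rightarrow> nat) \<Rightarrow> (nat \<times> nat \<Rightarrow> nat) set" where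
  "domres n a = {T. ss_filling n (shape n a) T \<and>
     (\<forall>j \<le> length (word_of n a (shape n a) T).
        let p = take j (word_of n a (shape n a) T) in
          (\<forall>i\<in>{1..<n}. hat_coef n p i \<ge> hat_coef n p (i+1)) \<and> hat_coef n p n \<ge> 0)}"

text \<open>hat-nu = b_1 hat-omega_1 + ... + b_n hat-omega_n has hat-epsilon_i-coefficient
  b_i + ... + b_n.\<close>
definition domres_nu :: "nat \<Rightarrow> (nat \<Rightarrow> nat) \<Rightarrow> (nat \<Rightarrow> nat) \<Rightarrow> (nat \<times> nat \<Rightarrow> nat) set" where
  "domres_nu n a b = {T \<in> domres n a.
     \<forall>i\<in>{1..n}. hat_coef n (word_of n a (shape n a) T) i = int (\<Sum>k\<in>{i..n}. b k)}"

definition dominant_word :: "nat \<Rightarrow> nat list \<Rightarrow> bool" where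
  "dominant_word n w \<longleftrightarrow> (\<forall>j \<le> length w. \<forall>i\<in>{1..<2*n}.
      count_list (take j w) i \<ge> count_list (take j w) (i+1))"

text \<open>LR(lambda/eta, nu); nu = b_1 omega_1 + ... + b_n omega_n, row i of its shape has
  b_i + ... + b_n boxes (0 boxes for i > n).\<close>
definition LR :: "nat \<Rightarrow> (nat \<Rightarrow> nat) \<Rightarrow> (nat \<Rightarrow> nat) \<Rightarrow> (nat \<Rightarrow> nat) \<Rightarrow> (nat \<times> nat \<Rightarrow> nat) set" where
  "LR n a eta b = {T. ss_filling n (shape n a - shape n eta) T \<and>
     dominant_word n (word_of n a (shape n a - shape n eta) T) \<and>
     (\<forall>i\<in>{1..2*n}. count_list (word_of n a (shape n a - shape n eta) T) i =
         (if i \<le> n then (\<Sum>k\<in>{i..n}. b k) else 0))}"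

definition dom_weight :: "nat \<Rightarrow> (nat \<Rightarrow> nat) \<Rightarrow> bool" where
  "dom_weight n eta \<longleftrightarrow> (\<forall>i. (i = 0 \<or> 2*n \<le> i) \<longrightarrow> eta i = 0)"

text \<open>The shape is even iff it has no columns of odd length.\<close>
definition even_shape :: "(nat \<Rightarrow> nat) \<Rightarrow> bool" where
  "even_shape eta \<longleftrightarrow> (\<forall>i. odd i \<longrightarrow> eta i = 0)"

end

theory Submission
  imports Defs
begin


lemma count_rep[simp]: "count_list (replicate k x) y = (if x = y then k else 0)"
  by (induction k) auto

lemma sorted2:
  "sorted xs \<Longrightarrow> set xs \<subseteq> {u,v} \<Longrightarrow> (u::nat) < v \<Longrightarrow>
   xs = replicate (count_list xs u) u @ replicate (count_list xs v) v"
proof (induction xs)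
  case Nil then show ?case by simp
next
  case (Cons x ys)
  show ?case
  proof (cases "x = u")
    case True
    with Cons show ?thesis by auto
  next
    case False
    with Cons have xv: "x = v" by auto
    have "\<forall>y\<in>set ys. y = v"
    proof
      fix y assume y: "y \<in> set ys"
      hence "y \<in> {u,v}" "x \<le> y" using Cons.prems by auto
      thus "y = v" using xv Cons.prems by auto
    qed
    hence "ys = replicate (length ys) v" by (simp add: replicate_length_same)
    moreover have "count_list ys u = 0" using \<open>\<forall>y\<in>set ys. y = v\<close> Cons.prems by auto
    ultimately show ?thesis using xv Cons.prems
      by (metis append_Nil count_list.simps(2) count_rep
          less_not_refl replicate_0 replicate_Suc)
  qed
qed

lemma sorted3:
  "sorted xs \<Longrightarrow> set xs \<subseteq> {u,v,w} \<Longrightarrow> (u::nat) < v \<Longrightarrow> v < w \<Longrightarrow>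
   xs = replicate (count_list xs u) u @ replicate (count_list xs v) v @ replicate (count_list xs w) w"
proof (induction xs)
  case Nil then show ?case by simp
next
  case (Cons x ys)
  show ?case
  proof (cases "x = u")
    case True
    with Cons show ?thesis by auto
  next
    case False
    with Cons have xv: "x \<in> {v,w}" by auto
    have "set ys \<subseteq> {v,w}"
    proof
      fix y assume y: "y \<in> set ys"
      hence "y \<in> {u,v,w}" "x \<le> y" using Cons.prems by auto
      thus "y \<in> {v,w}" using xv Cons.prems by auto
    qed
    moreover have "u \<notin> set ys" using \<open>set ys \<subseteq> {v,w}\<close> Cons.prems by auto
    hence c0: "count_list (x#ys) u = 0" using False by simp
    have "x#ys = replicate (count_list (x#ys) v) v @ replicate (count_list (x#ys) w) w"
      using sorted2[of "x#ys" v w] Cons.prems xv \<open>set ys \<subseteq> {v,w}\<close> by auto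
    then show ?thesis using c0 by (metis append_Nil replicate_0)
  qed
qed

lemma lin_interp:
  fixes \<alpha> \<beta> :: int
  assumes "0 \<le> \<alpha>" "0 \<le> \<alpha> + k * \<beta>" "0 \<le> t" "t \<le> k"
  shows "0 \<le> \<alpha> + t * \<beta>"
proof (cases "\<beta> \<ge> 0")
  case True then show ?thesis using assms by simp
next
  case False
  hence "k * \<beta> \<le> t * \<beta>" using assms by (simp add: mult_right_mono_neg)
  then show ?thesis using assms by linarith
qed

lemma hat_coef_append[simp]: "hat_coef n (xs @ ys) i = hat_coef n xs i + hat_coef n ys i"
  by (simp add: hat_coef_def)

lemma hat_coef_rep: "hat_coef n (replicate t v) i = int t * ((if v = i then 1 else 0) - (if v = 2*n+1-i then 1 else 0))"
  by (simp add: hat_coef_def)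

definition goodD :: "nat \<Rightarrow> nat list \<Rightarrow> bool" where
  "goodD n p \<longleftrightarrow> (\<forall>i\<in>{1..<n}. hat_coef n p i \<ge> hat_coef n p (i+1)) \<and> hat_coef n p n \<ge> 0"

definition allgoodD where "allgoodD n w \<longleftrightarrow> (\<forall>j \<le> length w. goodD n (take j w))"

lemma allgoodD_Nil: "allgoodD n []"
  by (simp add: allgoodD_def goodD_def hat_coef_def)

lemma take_append_rep: "j \<le> length w + k \<Longrightarrow> length w \<le> j \<Longrightarrow> take j (w @ replicate k v) = w @ replicate (j - length w) v"
  by simp

lemma allgoodD_snoc:
  assumes "allgoodD n w" "goodD n (w @ replicate k v)"
  shows "allgoodD n (w @ replicate k v)"
  unfolding allgoodD_def
proof (intro allI impI)
  fix j assume j: "j \<le> length (w @ replicate k v)"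
  show "goodD n (take j (w @ replicate k v))"
  proof (cases "j \<le> length w")
    case True then show ?thesis using assms(1) by (simp add: allgoodD_def)
  next
    case False
    define t where "t = j - length w"
    have tk: "t \<le> k" using j False by (simp add: t_def)
    have eq: "take j (w @ replicate k v) = w @ replicate t v" using j False by (simp add: t_def)
    have g0: "goodD n w" using assms(1) unfolding allgoodD_def by (metis order_refl take_all)
    show ?thesis unfolding eq goodD_def
    proof (intro conjI ballI)
      fix i assume i: "i \<in> {1..<n}"
      let ?\<alpha> = "hat_coef n w i - hat_coef n w (i+1)"
      let ?\<beta> = "((if v = i then 1 else 0) - (if v = 2*n+1-i then 1 else 0)) - ((if v = i+1 then 1 else 0) - (if v = 2*n+1-(i+1) then 1 else 0)) :: int"
      have "0 \<le> ?\<alpha>" using g0 i by (simp add: goodD_def)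
      moreover have "0 \<le> ?\<alpha> + int k * ?\<beta>" using assms(2) i
        by (simp add: goodD_def hat_coef_rep algebra_simps)
      ultimately have "0 \<le> ?\<alpha> + int t * ?\<beta>" using lin_interp[of ?\<alpha> "int k" ?\<beta> "int t"] tk by simp
      then show "hat_coef n (w @ replicate t v) (i + 1) \<le> hat_coef n (w @ replicate t v) i"
        by (simp add: hat_coef_rep algebra_simps)
    next
      let ?\<alpha> = "hat_coef n w n"
      let ?\<beta> = "((if v = n then 1 else 0) - (if v = 2*n+1-n then 1 else 0)) :: int"
      have "0 \<le> ?\<alpha>" using g0 by (simp add: goodD_def)
      moreover have "0 \<le> ?\<alpha> + int k * ?\<beta>" using assms(2)
        by (simp add: goodD_def hat_coef_rep algebra_simps)
      ultimately have "0 \<le> ?\<alpha> + int t * ?\<beta>" using lin_interp[of ?\<alpha> "int k" ?\<beta> "int t"] tk by simp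
      then show "0 \<le> hat_coef n (w @ replicate t v) n"
        by (simp add: hat_coef_rep algebra_simps)
    qed
  qed
qed


definition goodL :: "nat \<Rightarrow> nat list \<Rightarrow> bool" where
  "goodL n p \<longleftrightarrow> (\<forall>i\<in>{1..<2*n}. count_list p i \<ge> count_list p (i+1))"

lemma dominant_word_alt: "dominant_word n w \<longleftrightarrow> (\<forall>j \<le> length w. goodL n (take j w))"
  by (simp add: dominant_word_def goodL_def)

lemma dominant_Nil: "dominant_word n []"
  by (simp add: dominant_word_def)

lemma lin_interp_nat:
  fixes \<alpha> \<beta> :: int
  assumes "0 \<le> \<alpha>" "0 \<le> \<alpha> + k * \<beta>" "0 \<le> t" "t \<le> k"
  shows "0 \<le> \<alpha> + t * \<beta>"
  using lin_interp assms by blast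

lemma dominant_snoc:
  assumes "dominant_word n w" "goodL n (w @ replicate k v)"
  shows "dominant_word n (w @ replicate k v)"
  unfolding dominant_word_alt
proof (intro allI impI)
  fix j assume j: "j \<le> length (w @ replicate k v)"
  show "goodL n (take j (w @ replicate k v))"
  proof (cases "j \<le> length w")
    case True then show ?thesis using assms(1) by (simp add: dominant_word_alt)
  next
    case False
    define t where "t = j - length w"
    have tk: "t \<le> k" using j False by (simp add: t_def)
    have eq: "take j (w @ replicate k v) = w @ replicate t v" using j False by (simp add: t_def)
    have g0: "goodL n w" using assms(1) unfolding dominant_word_alt by (metis order_refl take_all)
    show ?thesis unfolding eq goodL_def
    proof
      fix i assume i: "i \<in> {1..<2*n}"
      let ?\<alpha> = "int (count_list w i) - int (count_list w (i+1))"
      let ?\<beta> = "(if v = i then 1 else 0) - (if v = i+1 then 1 else 0) :: int"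
      have "0 \<le> ?\<alpha>" using g0 i by (simp add: goodL_def)
      moreover have "0 \<le> ?\<alpha> + int k * ?\<beta>"
      proof -
        have "count_list (w @ replicate k v) (i+1) \<le> count_list (w @ replicate k v) i"
          using assms(2) i by (simp add: goodL_def del: count_list_append)
        then show ?thesis by (simp split: if_splits)
      qed
      ultimately have "0 \<le> ?\<alpha> + int t * ?\<beta>" using lin_interp[of ?\<alpha> "int k" ?\<beta> "int t"] tk by simp
      then show "count_list (w @ replicate t v) (i + 1) \<le> count_list (w @ replicate t v) i"
        by (simp split: if_splits)
    qed
  qed
qed

lemma filter_upt_range:
  assumes "hi \<le> C"
  shows "filter (\<lambda>c. lo < c \<and> c \<le> hi) [1..<C+1] = [lo+1..<hi+1]"
proof (rule sorted_distinct_set_unique)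
  show "sorted (filter (\<lambda>c. lo < c \<and> c \<le> hi) [1..<C+1])"
    by (rule sorted_wrt_filter, rule sorted_upt)
  show "distinct (filter (\<lambda>c. lo < c \<and> c \<le> hi) [1..<C+1])" by simp
  show "sorted [lo+1..<hi+1]" by (rule sorted_upt)
  show "distinct [lo+1..<hi+1]" by simp
  show "set (filter (\<lambda>c. lo < c \<and> c \<le> hi) [1..<C+1]) = set [lo+1..<hi+1]"
    using assms by (auto simp del: upt_Suc)
qed

lemma reading_word_gen:
  assumes "\<forall>r\<in>{1..R}. hi r \<le> C"
  shows "reading_word R C {(r,c). 1 \<le> r \<and> r \<le> R \<and> lo r < c \<and> c \<le> hi r} T =
     concat (map (\<lambda>r. rev (map (\<lambda>c. T(r,c)) [lo r+1..<hi r+1])) [1..<R+1])"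
  unfolding reading_word_def
proof (rule arg_cong[where f=concat], rule map_cong[OF refl])
  fix r assume r: "r \<in> set [1..<R+1]"
  have "filter (\<lambda>c. (r, c) \<in> {(r,c). 1 \<le> r \<and> r \<le> R \<and> lo r < c \<and> c \<le> hi r}) (rev [1..<C+1])
      = filter (\<lambda>c. lo r < c \<and> c \<le> hi r) (rev [1..<C+1])"
    using r by (intro filter_cong) auto
  also have "\<dots> = rev [lo r+1..<hi r+1]"
    using filter_upt_range[of "hi r" C "lo r"] assms r by (metis atLeastAtMost_iff atLeastLessThan_iff less_Suc_eq_le rev_filter set_upt Suc_eq_plus1)
  finally show "map (\<lambda>c. T (r, c)) (filter (\<lambda>c. (r, c) \<in> {(r,c). 1 \<le> r \<and> r \<le> R \<and> lo r < c \<and> c \<le> hi r}) (rev [1..<C+1]))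
     = rev (map (\<lambda>c. T (r, c)) [lo r + 1..<hi r + 1])"
    by (simp add: rev_map)
qed

lemma concat3:
  assumes "3 \<le> R" "\<forall>r. 4 \<le> r \<longrightarrow> r \<le> R \<longrightarrow> f r = []"
  shows "concat (map f [1..<R+1]) = f 1 @ f 2 @ f 3"
proof -
  have "[1..<R+1] = [1..<4] @ [4..<R+1]"
    using upt_add_eq_append[of 1 4 "R+1-4"] assms by simp
  moreover have "[1..<4] = [1,2,3::nat]" by (simp add: upt_rec)
  moreover have "concat (map f [4..<R+1]) = []" using assms by auto
  ultimately show ?thesis by simp
qed

lemma map_piece:
  assumes "\<forall>c. a \<le> c \<and> c < a + s \<longrightarrow> f c = v"
  shows "map f [a..<a+s] = replicate s v"
proof -
  have "map f [a..<a+s] = map (\<lambda>_. v) [a..<a+s]" using assms by (intro map_cong) auto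
  then show ?thesis by (simp add: map_replicate_const)
qed

lemma map_split:
  "map f [a..<a+s+t] = map f [a..<a+s] @ map f [a+s..<a+s+t]"
proof -
  have "[a..<a+s+t] = [a..<a+s] @ [a+s..<a+s+t]" using upt_add_eq_append[of a "a+s" t] by simp
  then show ?thesis by simp
qed

lemma sorted_map_upt:
  assumes "\<forall>c c'. a \<le> c \<longrightarrow> c \<le> c' \<longrightarrow> c' < b \<longrightarrow> f c \<le> f c'"
  shows "sorted (map f [a..<b])"
  unfolding sorted_iff_nth_mono
  using assms by auto

lemma nth_map_upt1: "1 \<le> c \<Longrightarrow> c \<le> L \<Longrightarrow> map f [lo+1..<lo+L+1] ! (c-1) = f (lo + c)"
  by (simp add: nth_map del: upt_Suc)


lemma row_len_mono: "r \<le> r' \<Longrightarrow> row_len n a r' \<le> row_len n a r"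
  unfolding row_len_def by (rule sum_mono2) auto

lemma goodD_nonneg:
  assumes "goodD n p" "1 \<le> i" "i \<le> n"
  shows "0 \<le> hat_coef n p i"
proof -
  have "\<forall>d. d \<le> n - 1 \<longrightarrow> 0 \<le> hat_coef n p (n - d)"
  proof
    fix d show "d \<le> n - 1 \<longrightarrow> 0 \<le> hat_coef n p (n - d)"
    proof (induction d)
      case 0 then show ?case using assms(1) by (simp add: goodD_def)
    next
      case (Suc d)
      show ?case
      proof
        assume d: "Suc d \<le> n - 1"
        have "n - Suc d \<in> {1..<n}" using d by auto
        hence "hat_coef n p (n - Suc d + 1) \<le> hat_coef n p (n - Suc d)"
          using assms(1) by (simp add: goodD_def)
        moreover have "n - Suc d + 1 = n - d" using d by auto
        ultimately show "0 \<le> hat_coef n p (n - Suc d)" using Suc d by auto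
      qed
    qed
  qed
  moreover have "n - i \<le> n - 1" using assms by auto
  ultimately have "0 \<le> hat_coef n p (n - (n - i))" by blast
  moreover have "n - (n - i) = i" using assms by auto
  ultimately show ?thesis by simp
qed

lemma count_pos: "v \<in> set s \<Longrightarrow> 1 \<le> count_list s v"
  using count_list_0_iff[of s v] by linarith

lemma genA:
  assumes g: "goodD n (q @ s)" and v: "v \<in> set s" "\<forall>y\<in>set s. v \<le> y" "n < v" "v \<le> 2*n"
    and nq: "2*n+1-v \<notin> set q"
  shows False
proof -
  define i where "i = 2*n+1-v"
  have i: "1 \<le> i" "i \<le> n" "2*n+1-i = v" using v by (auto simp: i_def)
  have "i \<notin> set s" using v i by force
  hence c0: "count_list (q @ s) i = 0" using nq by (simp add: i_def)
  have "1 \<le> count_list (q @ s) v" using count_pos[OF v(1)] by simp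
  hence "hat_coef n (q @ s) i < 0" using c0 i by (simp add: hat_coef_def)
  with goodD_nonneg[OF g i(1,2)] show False by simp
qed

lemma genB:
  assumes g: "goodD n (q @ s)" and v: "v \<in> set s" "\<forall>y\<in>set s. v \<le> y" "2 \<le> v" "v \<le> n"
    and nq: "v - 1 \<notin> set q" "2*n+1-v \<notin> set q" "2*n+1-v \<notin> set s"
  shows False
proof -
  have i: "v - 1 \<in> {1..<n}" using v by auto
  hence "hat_coef n (q @ s) (v - 1 + 1) \<le> hat_coef n (q @ s) (v - 1)" using g by (simp add: goodD_def)
  moreover have "v - 1 \<notin> set s" using v by force
  moreover have "1 \<le> count_list (q @ s) v" using count_pos[OF v(1)] by simp
  moreover have "v - 1 + 1 = v" using v by simp
  ultimately show False using nq by (simp add: hat_coef_def)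
qed

lemma allgoodD_prefix: "allgoodD n w \<Longrightarrow> w = p @ s \<Longrightarrow> goodD n p"
  unfolding allgoodD_def by (metis append_eq_conv_conj le_add1 length_append)

lemma nth_map_upt0: "1 \<le> c \<Longrightarrow> c \<le> L \<Longrightarrow> map f [1..<L+1] ! (c-1) = f c"
  using nth_map_upt1[of c L f 0] by simp

lemma upt_split_at: "1 \<le> c \<Longrightarrow> c \<le> L + 1 \<Longrightarrow> [1..<L+1] = [1..<c] @ [c..<L+1]"
  by (metis le_add1 le_add_diff_inverse upt_add_eq_append)

context
  fixes n :: nat and a b :: "nat \<Rightarrow> nat"
  assumes n2: "n \<ge> 2" and hyp: "n = 2 \<or> (\<forall>i\<in>{4..2*n-1}. a i = 0)"
begin

lemma L_zero: "4 \<le> r \<Longrightarrow> row_len n a r = 0"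
  using hyp unfolding row_len_def by (auto intro!: sum.neutral)

lemma shape_alt: "shape n a = {(r,c). 1 \<le> r \<and> r \<le> 2*n-1 \<and> (\<lambda>_. 0::nat) r < c \<and> c \<le> row_len n a r}"
  unfolding shape_def by auto

lemma word_shape:
  "word_of n a (shape n a) T =
     rev (map (\<lambda>c. T(1,c)) [1..<row_len n a 1+1]) @ rev (map (\<lambda>c. T(2,c)) [1..<row_len n a 2+1]) @
     rev (map (\<lambda>c. T(3,c)) [1..<row_len n a 3+1])"
proof -
  have "word_of n a (shape n a) T = concat (map (\<lambda>r. rev (map (\<lambda>c. T(r,c)) [0+1..<row_len n a r+1])) [1..<(2*n-1)+1])"
    unfolding word_of_def shape_alt
    by (rule reading_word_gen) (auto intro: row_len_mono)
  also have "\<dots> = rev (map (\<lambda>c. T(1,c)) [0+1..<row_len n a 1+1]) @ rev (map (\<lambda>c. T(2,c)) [0+1..<row_len n a 2+1]) @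
     rev (map (\<lambda>c. T(3,c)) [0+1..<row_len n a 3+1])"
    by (rule concat3) (use n2 L_zero in \<open>auto simp del: upt_Suc\<close>)
  finally show ?thesis by simp
qed

end


definition condD :: "nat \<Rightarrow> (nat \<Rightarrow> nat) \<Rightarrow> (nat \<Rightarrow> nat) \<Rightarrow> nat \<Rightarrow> nat \<Rightarrow> nat \<Rightarrow> nat \<Rightarrow> nat \<Rightarrow> bool" where
  "condD n a b m s2 p q r \<longleftrightarrow> s2 + m = row_len n a 2 \<and> row_len n a 3 \<le> s2 \<and> p + q + r = row_len n a 3 \<and>
     r + row_len n a 2 \<le> row_len n a 1 \<and> row_len n a 1 = (\<Sum>k\<in>{1..n}. b k) + m + r \<and>
     s2 = (\<Sum>k\<in>{2..n}. b k) + q \<and> p = (\<Sum>k\<in>{3..n}. b k) \<and> (\<forall>i\<in>{4..n}. (\<Sum>k\<in>{i..n}. b k) = 0)"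

context
  fixes n :: nat and a b :: "nat \<Rightarrow> nat"
  assumes n2: "n \<ge> 2" and hyp: "n = 2 \<or> (\<forall>i\<in>{4..2*n-1}. a i = 0)"
begin

lemma nf1: "(1::nat) \<noteq> 2*n" using n2 by arith
lemma nf2: "(1::nat) \<noteq> 2*n-1" using n2 by arith
lemma nf3: "(1::nat) \<noteq> 2*n - Suc 0" using n2 by arith
lemma nf4: "(1::nat) \<noteq> 2*n-2" using n2 by arith
lemma nf5: "(1::nat) \<noteq> Suc (2*n)" using n2 by arith
lemma nf6: "(Suc 0::nat) \<noteq> 2*n" using n2 by arith
lemma nf7: "(Suc 0::nat) \<noteq> 2*n-1" using n2 by arith
lemma nf8: "(Suc 0::nat) \<noteq> 2*n - Suc 0" using n2 by arith
lemma nf9: "(Suc 0::nat) \<noteq> 2*n-2" using n2 by arith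
lemma nf10: "(Suc 0::nat) \<noteq> Suc (2*n)" using n2 by arith
lemma nf11: "(2::nat) \<noteq> 2*n" using n2 by arith
lemma nf12: "(2::nat) \<noteq> 2*n-1" using n2 by arith
lemma nf13: "(2::nat) \<noteq> 2*n - Suc 0" using n2 by arith
lemma nf14: "(2::nat) \<noteq> Suc (2*n)" using n2 by arith
lemma nf15: "(3::nat) \<noteq> 2*n" using n2 by arith
lemma nf16: "(3::nat) \<noteq> 2*n-2" using n2 by arith
lemma nf17: "(3::nat) \<noteq> Suc (2*n)" using n2 by arith
lemma nf18: "(2*n::nat) \<noteq> 1" using n2 by arith
lemma nf19: "(2*n::nat) \<noteq> Suc 0" using n2 by arith
lemma nf20: "(2*n::nat) \<noteq> 2" using n2 by arith
lemma nf21: "(2*n::nat) \<noteq> 3" using n2 by arith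
lemma nf22: "(2*n::nat) \<noteq> 2*n-1" using n2 by arith
lemma nf23: "(2*n::nat) \<noteq> 2*n - Suc 0" using n2 by arith
lemma nf24: "(2*n::nat) \<noteq> 2*n-2" using n2 by arith
lemma nf25: "(2*n::nat) \<noteq> Suc (2*n)" using n2 by arith
lemma nf26: "(2*n-1::nat) \<noteq> 1" using n2 by arith
lemma nf27: "(2*n-1::nat) \<noteq> Suc 0" using n2 by arith
lemma nf28: "(2*n-1::nat) \<noteq> 2" using n2 by arith
lemma nf29: "(2*n-1::nat) \<noteq> 2*n" using n2 by arith
lemma nf30: "(2*n-1::nat) \<noteq> 2*n-2" using n2 by arith
lemma nf31: "(2*n-1::nat) \<noteq> Suc (2*n)" using n2 by arith
lemma nf32: "(2*n - Suc 0::nat) \<noteq> 1" using n2 by arith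
lemma nf33: "(2*n - Suc 0::nat) \<noteq> Suc 0" using n2 by arith
lemma nf34: "(2*n - Suc 0::nat) \<noteq> 2" using n2 by arith
lemma nf35: "(2*n - Suc 0::nat) \<noteq> 2*n" using n2 by arith
lemma nf36: "(2*n - Suc 0::nat) \<noteq> 2*n-2" using n2 by arith
lemma nf37: "(2*n - Suc 0::nat) \<noteq> Suc (2*n)" using n2 by arith
lemma nf38: "(2*n-2::nat) \<noteq> 1" using n2 by arith
lemma nf39: "(2*n-2::nat) \<noteq> Suc 0" using n2 by arith
lemma nf40: "(2*n-2::nat) \<noteq> 3" using n2 by arith
lemma nf41: "(2*n-2::nat) \<noteq> 2*n" using n2 by arith
lemma nf42: "(2*n-2::nat) \<noteq> 2*n-1" using n2 by arith
lemma nf43: "(2*n-2::nat) \<noteq> 2*n - Suc 0" using n2 by arith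
lemma nf44: "(2*n-2::nat) \<noteq> Suc (2*n)" using n2 by arith
lemma nf45: "(Suc (2*n)::nat) \<noteq> 1" using n2 by arith
lemma nf46: "(Suc (2*n)::nat) \<noteq> Suc 0" using n2 by arith
lemma nf47: "(Suc (2*n)::nat) \<noteq> 2" using n2 by arith
lemma nf48: "(Suc (2*n)::nat) \<noteq> 3" using n2 by arith
lemma nf49: "(Suc (2*n)::nat) \<noteq> 2*n" using n2 by arith
lemma nf50: "(Suc (2*n)::nat) \<noteq> 2*n-1" using n2 by arith
lemma nf51: "(Suc (2*n)::nat) \<noteq> 2*n - Suc 0" using n2 by arith
lemma nf52: "(Suc (2*n)::nat) \<noteq> 2*n-2" using n2 by arith
lemmas nf = nf1 nf2 nf3 nf4 nf5 nf6 nf7 nf8 nf9 nf10 nf11 nf12 nf13 nf14 nf15 nf16 nf17 nf18 nf19 nf20 nf21 nf22 nf23 nf24 nf25 nf26 nf27 nf28 nf29 nf30 nf31 nf32 nf33 nf34 nf35 nf36 nf37 nf38 nf39 nf40 nf41 nf42 nf43 nf44 nf45 nf46 nf47 nf48 nf49 nf50 nf51 nf52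

lemma domres_struct:
  assumes T: "T \<in> domres_nu n a b"
  shows "\<exists>m s2 p q r. condD n a b m s2 p q r \<and>
    map (\<lambda>c. T(1,c)) [1..<row_len n a 1+1] = replicate (row_len n a 1) 1 \<and>
    map (\<lambda>c. T(2,c)) [1..<row_len n a 2+1] = replicate s2 2 @ replicate m (2*n) \<and>
    map (\<lambda>c. T(3,c)) [1..<row_len n a 3+1] = replicate p 3 @ replicate q (2*n-1) @ replicate r (2*n)"
proof -
  define L1 where "L1 = row_len n a 1"
  define L2 where "L2 = row_len n a 2"
  define L3 where "L3 = row_len n a 3"
  define X1 where "X1 = map (\<lambda>c. T(1,c)) [1..<L1+1]"
  define X2 where "X2 = map (\<lambda>c. T(2,c)) [1..<L2+1]"
  define X3 where "X3 = map (\<lambda>c. T(3,c)) [1..<L3+1]"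
  define W where "W = word_of n a (shape n a) T"
  have WX: "W = rev X1 @ rev X2 @ rev X3"
    unfolding W_def X1_def X2_def X3_def L1_def L2_def L3_def using word_shape[OF n2 hyp] by simp
  have ss: "ss_filling n (shape n a) T" and pre: "allgoodD n W"
    and wt: "\<forall>i\<in>{1..n}. hat_coef n W i = int (\<Sum>k\<in>{i..n}. b k)"
    using T unfolding domres_nu_def domres_def allgoodD_def goodD_def W_def Let_def by auto
  have L: "L2 \<le> L1" "L3 \<le> L2" unfolding L1_def L2_def L3_def by (auto intro: row_len_mono)
  have Lr: "\<And>r. r \<in> {1,2,3} \<Longrightarrow> row_len n a r = (if r = 1 then L1 else if r = 2 then L2 else L3)"
    unfolding L1_def L2_def L3_def by auto
  have inS: "\<And>r c. r \<in> {1,2,3} \<Longrightarrow> 1 \<le> c \<Longrightarrow> c \<le> row_len n a r \<Longrightarrow> (r,c) \<in> shape n a"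
    unfolding shape_def using n2 by auto
  have bnd: "\<And>r c. r \<in> {1,2,3} \<Longrightarrow> 1 \<le> c \<Longrightarrow> c \<le> row_len n a r \<Longrightarrow> 1 \<le> T(r,c) \<and> T(r,c) \<le> 2*n"
    using ss inS unfolding ss_filling_def by blast
  have mono: "\<And>r c c'. r \<in> {1,2,3} \<Longrightarrow> 1 \<le> c \<Longrightarrow> c \<le> c' \<Longrightarrow> c' \<le> row_len n a r \<Longrightarrow> T(r,c) \<le> T(r,c')"
  proof -
    fix r c c' assume h: "r \<in> {1,2,3}" "1 \<le> c" "c \<le> c'" "c' \<le> row_len n a r"
    have "(r,c) \<in> shape n a" "(r,c') \<in> shape n a" using inS h by auto
    then show "T(r,c) \<le> T(r,c')" using ss h unfolding ss_filling_def by blast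
  qed
  have col: "\<And>r r' c. r \<in> {1,2,3} \<Longrightarrow> r' \<in> {1,2,3} \<Longrightarrow> r < r' \<Longrightarrow> 1 \<le> c \<Longrightarrow> c \<le> row_len n a r' \<Longrightarrow> T(r,c) < T(r',c)"
  proof -
    fix r r' c assume h: "r \<in> {1,2,3}" "r' \<in> {1,2,3}" "r < r'" "1 \<le> c" "c \<le> row_len n a r'"
    have "row_len n a r' \<le> row_len n a r" using h by (intro row_len_mono) simp
    hence "(r,c) \<in> shape n a" "(r',c) \<in> shape n a" using inS h by auto
    then show "T(r,c) < T(r',c)" using ss h unfolding ss_filling_def by blast
  qed
  have r1: "\<And>c. 1 \<le> c \<Longrightarrow> c \<le> L1 \<Longrightarrow> T(1,c) = 1"
  proof -
    fix c assume c: "1 \<le> c" "c \<le> L1"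
    define v where "v = T(1,L1)"
    have "[1..<L1+1] = [1..<L1] @ [L1]" using c by simp
    hence "rev X1 = [v] @ rev (map (\<lambda>c. T(1,c)) [1..<L1])" unfolding X1_def v_def by simp
    hence "W = ([] @ [v]) @ (rev (map (\<lambda>c. T(1,c)) [1..<L1]) @ rev X2 @ rev X3)" using WX by simp
    hence g: "goodD n ([] @ [v])" using allgoodD_prefix[OF pre] by blast
    have vb: "1 \<le> v" "v \<le> 2*n" using bnd[of 1 L1] c unfolding v_def L1_def by auto
    have "v = 1"
    proof (rule ccontr)
      assume "v \<noteq> 1"
      show False
      proof (cases "n < v")
        case True then show False using genA[OF g, of v] vb by auto
      next
        case False
        have "2*n+1-v \<noteq> v" using False by arith
        then show False using genB[OF g, of v] vb \<open>v \<noteq> 1\<close> False by auto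
      qed
    qed
    moreover have "T(1,c) \<le> v" using mono[of 1 c L1] c unfolding v_def L1_def by auto
    moreover have "1 \<le> T(1,c)" using bnd[of 1 c] c unfolding L1_def using L by auto
    ultimately show "T(1,c) = 1" by simp
  qed
  have X1r: "X1 = replicate L1 1"
  proof -
    have "X1 = map (\<lambda>_. 1) [1..<L1+1]" unfolding X1_def using r1 by (intro map_cong) auto
    then show ?thesis by (simp add: map_replicate_const)
  qed
  define s2c where "s2c c = rev (map (\<lambda>c'. T(2,c')) [c..<L2+1])" for c
  have pre2: "goodD n (rev X1 @ s2c c)" if c: "1 \<le> c" "c \<le> L2" for c
  proof -
    have "rev X2 = s2c c @ rev (map (\<lambda>c'. T(2,c')) [1..<c])"
      unfolding X2_def s2c_def using upt_split_at[of c L2] c by simp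
    hence "W = (rev X1 @ s2c c) @ (rev (map (\<lambda>c'. T(2,c')) [1..<c]) @ rev X3)" using WX by simp
    thus ?thesis using allgoodD_prefix[OF pre] by blast
  qed
  have v2: "T(2,c) \<in> set (s2c c)" "\<forall>y\<in>set (s2c c). T(2,c) \<le> y" if c: "1 \<le> c" "c \<le> L2" for c
    using c mono[of 2] unfolding s2c_def L2_def by (auto simp del: upt_Suc)
  have b2: "2 \<le> T(2,c) \<and> T(2,c) \<le> 2*n" if c: "1 \<le> c" "c \<le> L2" for c
    using col[of 1 2 c] r1[of c] bnd[of 2 c] c L unfolding L2_def by auto
  have s2elem: "\<exists>c'. c \<le> c' \<and> c' \<le> L2 \<and> y = T(2,c')" if "y \<in> set (s2c c)" for c y
    using that unfolding s2c_def by (auto simp del: upt_Suc)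
  have setX1: "set (rev X1) \<subseteq> {1}" using X1r by auto
  have A2: "\<not> (n < T(2,c) \<and> T(2,c) < 2*n)" if c: "1 \<le> c" "c \<le> L2" for c
  proof
    assume h: "n < T(2,c) \<and> T(2,c) < 2*n"
    have "2*n+1-T(2,c) \<notin> set (rev X1)" using setX1 h by auto
    then show False using genA[OF pre2[OF c] v2[OF c]] h by auto
  qed
  have r2: "T(2,c) = 2 \<or> T(2,c) = 2*n" if c: "1 \<le> c" "c \<le> L2" for c
  proof (rule ccontr)
    assume h: "\<not> (T(2,c) = 2 \<or> T(2,c) = 2*n)"
    have hv: "3 \<le> T(2,c)" "T(2,c) \<le> n" using A2[OF c] b2[OF c] h by auto
    have nq3: "2*n+1-T(2,c) \<notin> set (s2c c)"
    proof
      assume "2*n+1-T(2,c) \<in> set (s2c c)"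
      then obtain c' where c': "c \<le> c'" "c' \<le> L2" "2*n+1-T(2,c) = T(2,c')" using s2elem by blast
      have "n < T(2,c') \<and> T(2,c') < 2*n" using c'(3) hv by linarith
      moreover have "1 \<le> c'" using c c' by linarith
      ultimately show False using A2[of c'] c'(2) by blast
    qed
    have nq1: "T(2,c) - 1 \<notin> set (rev X1)" using setX1 hv by auto
    have nq2: "2*n+1-T(2,c) \<notin> set (rev X1)" using setX1 hv by auto
    have h2: "2 \<le> T(2,c)" using hv by linarith
    show False by (rule genB[OF pre2[OF c] v2[OF c] h2 hv(2) nq1 nq2 nq3])
  qed
  have r23: "T(2,c) = 2 \<and> 3 \<le> T(3,c) \<and> T(3,c) \<le> 2*n" if c: "1 \<le> c" "c \<le> L3" for c
  proof -
    have "T(2,c) < T(3,c)" using col[of 2 3 c] c unfolding L3_def by auto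
    moreover have "T(3,c) \<le> 2*n" using bnd[of 3 c] c unfolding L3_def by auto
    moreover have "T(2,c) = 2 \<or> T(2,c) = 2*n" using r2[of c] c L by auto
    ultimately show ?thesis by auto
  qed
  define s3c where "s3c c = rev (map (\<lambda>c'. T(3,c')) [c..<L3+1])" for c
  have pre3: "goodD n ((rev X1 @ rev X2) @ s3c c)" if c: "1 \<le> c" "c \<le> L3" for c
  proof -
    have "rev X3 = s3c c @ rev (map (\<lambda>c'. T(3,c')) [1..<c])"
      unfolding X3_def s3c_def using upt_split_at[of c L3] c by simp
    hence "W = ((rev X1 @ rev X2) @ s3c c) @ rev (map (\<lambda>c'. T(3,c')) [1..<c])" using WX by simp
    thus ?thesis using allgoodD_prefix[OF pre] by blast
  qed
  have v3: "T(3,c) \<in> set (s3c c)" "\<forall>y\<in>set (s3c c). T(3,c) \<le> y" if c: "1 \<le> c" "c \<le> L3" for c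
    using c mono[of 3] unfolding s3c_def L3_def by (auto simp del: upt_Suc)
  have s3elem: "\<exists>c'. c \<le> c' \<and> c' \<le> L3 \<and> y = T(3,c')" if "y \<in> set (s3c c)" for c y
    using that unfolding s3c_def by (auto simp del: upt_Suc)
  have setX2: "set X2 \<subseteq> {2, 2*n}" 
  proof
    fix y assume "y \<in> set X2"
    then obtain c where "c \<in> {1..<L2+1}" "y = T(2,c)" unfolding X2_def by (auto simp del: upt_Suc)
    then show "y \<in> {2, 2*n}" using r2[of c] by auto
  qed
  have setq3: "set (rev X1 @ rev X2) \<subseteq> {1, 2, 2*n}" using setX1 setX2 by auto
  have A3: "\<not> (n < T(3,c) \<and> T(3,c) < 2*n-1)" if c: "1 \<le> c" "c \<le> L3" for c
  proof
    assume h: "n < T(3,c) \<and> T(3,c) < 2*n-1"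
    have nq: "2*n+1-T(3,c) \<notin> set (rev X1 @ rev X2)" using setq3 h by auto
    have h1: "n < T(3,c)" and h2: "T(3,c) \<le> 2*n" using h by linarith+
    show False by (rule genA[OF pre3[OF c] v3[OF c] h1 h2 nq])
  qed
  have r3: "T(3,c) = 3 \<or> T(3,c) = 2*n-1 \<or> T(3,c) = 2*n" if c: "1 \<le> c" "c \<le> L3" for c
  proof (rule ccontr)
    assume h: "\<not> (T(3,c) = 3 \<or> T(3,c) = 2*n-1 \<or> T(3,c) = 2*n)"
    have hv: "4 \<le> T(3,c)" "T(3,c) \<le> n" using A3[OF c] r23[OF c] h by auto
    have nq3: "2*n+1-T(3,c) \<notin> set (s3c c)"
    proof
      assume "2*n+1-T(3,c) \<in> set (s3c c)"
      then obtain c' where c': "c \<le> c'" "c' \<le> L3" "2*n+1-T(3,c) = T(3,c')" using s3elem by blast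
      have "n < T(3,c') \<and> T(3,c') < 2*n-1" using c'(3) hv by linarith
      moreover have "1 \<le> c'" using c c' by linarith
      ultimately show False using A3[of c'] c'(2) by blast
    qed
    have nq1: "T(3,c) - 1 \<notin> set (rev X1 @ rev X2)" using setq3 hv by auto
    have nq2: "2*n+1-T(3,c) \<notin> set (rev X1 @ rev X2)" using setq3 hv by auto
    have h2: "2 \<le> T(3,c)" using hv by linarith
    show False by (rule genB[OF pre3[OF c] v3[OF c] h2 hv(2) nq1 nq2 nq3])
  qed
  have sX2: "sorted X2" unfolding X2_def
    by (rule sorted_map_upt) (use mono[of 2] in \<open>auto simp: L2_def\<close>)
  obtain s2 m where X2r: "X2 = replicate s2 2 @ replicate m (2*n)"
    using sorted2[OF sX2 setX2] n2 by force
  have s2m: "s2 + m = L2" using X2r unfolding X2_def by (metis length_append length_map length_replicate length_upt add_diff_cancel_right')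
  have sX3: "sorted X3" unfolding X3_def
    by (rule sorted_map_upt) (use mono[of 3] in \<open>auto simp: L3_def\<close>)
  have setX3: "set X3 \<subseteq> {3, 2*n-1, 2*n}" 
  proof
    fix y assume "y \<in> set X3"
    then obtain c where "c \<in> {1..<L3+1}" "y = T(3,c)" unfolding X3_def by (auto simp del: upt_Suc)
    then show "y \<in> {3, 2*n-1, 2*n}" using r3[of c] by auto
  qed
  obtain p q r where X3r: "X3 = replicate p 3 @ replicate q (2*n-1) @ replicate r (2*n)" and p2: "n = 2 \<longrightarrow> p = 0"
  proof (cases "n = 2")
    case True
    hence "set X3 \<subseteq> {3, 4}" using setX3 by auto
    hence "X3 = replicate (count_list X3 3) 3 @ replicate (count_list X3 4) 4" using sorted2[OF sX3] by auto
    then show ?thesis using that[of 0 "count_list X3 3" "count_list X3 4"] True by auto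
  next
    case False
    hence "3 < 2*n-1" using n2 by auto
    then show ?thesis using sorted3[OF sX3 setX3] that False by auto
  qed
  have pqr: "p + q + r = L3" using X3r unfolding X3_def
    by (metis add.assoc length_append length_map length_replicate length_upt add_diff_cancel_right')
  have Wr: "W = replicate L1 1 @ (replicate m (2*n) @ replicate s2 2) @ (replicate r (2*n) @ replicate q (2*n-1) @ replicate p 3)"
    using WX X1r X2r X3r by simp
  have c1: "L3 \<le> s2"
  proof (rule ccontr)
    assume "\<not> L3 \<le> s2"
    hence h: "s2 < L3" by simp
    have "T(2, s2+1) = X2 ! s2" unfolding X2_def using nth_map_upt0[of "s2+1" L2 "\<lambda>c. T(2,c)"] h L by (simp del: upt_Suc)
    also have "\<dots> = 2*n" using X2r h L s2m by (simp add: nth_append)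
    finally show False using r23[of "s2+1"] h n2 by simp
  qed
  have c2: "r + L2 \<le> L1"
  proof -
    have "W = (replicate L1 1 @ replicate m (2*n) @ replicate s2 2 @ replicate r (2*n)) @ (replicate q (2*n-1) @ replicate p 3)"
      using Wr by simp
    hence g: "goodD n (replicate L1 1 @ replicate m (2*n) @ replicate s2 2 @ replicate r (2*n))"
      using allgoodD_prefix[OF pre] by blast
    define P where "P = replicate L1 1 @ replicate m (2*n) @ replicate s2 2 @ replicate r (2*n)"
    have "1 \<in> {1..<n}" using n2 by auto
    hence "hat_coef n P (1+1) \<le> hat_coef n P 1"
      using g unfolding goodD_def P_def[symmetric] by blast
    then show ?thesis using n2 s2m unfolding P_def by (simp add: hat_coef_def nf)
  qed
  have cnt: "count_list W l = (if l = 1 then L1 else 0) + (if l = 2*n then m + r else 0) + (if l = 2 then s2 else 0)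
      + (if l = 2*n-1 then q else 0) + (if l = 3 then p else 0)" for l
    using Wr by auto
  have wt': "int (count_list W i) - int (count_list W (2*n+1-i)) = int (\<Sum>k\<in>{i..n}. b k)"
    if "1 \<le> i" "i \<le> n" for i
    using wt that by (auto simp: hat_coef_def)
  have w1: "int L1 - int (m + r) = int (\<Sum>k\<in>{1..n}. b k)"
  proof -
    have "count_list W 1 = L1" "count_list W (2*n) = m + r" using cnt[of 1] cnt[of "2*n"] by (simp_all add: nf)
    then show ?thesis using wt'[of 1] n2 by simp
  qed
  have w2: "int s2 - int q = int (\<Sum>k\<in>{2..n}. b k)"
  proof -
    have "count_list W 2 = s2" "count_list W (2*n-1) = q" using cnt[of 2] cnt[of "2*n-1"] p2 by (auto simp add: nf)
    moreover have "2*n+1-2 = 2*n-1" by simp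
    ultimately show ?thesis using wt'[of 2] n2 by simp
  qed
  have w3: "p = (\<Sum>k\<in>{3..n}. b k)"
  proof (cases "n = 2")
    case True then show ?thesis using p2 by simp
  next
    case False
    hence n3: "3 \<le> n" using n2 by auto
    have "count_list W 3 = p" "count_list W (2*n-2) = 0" using cnt[of 3] cnt[of "2*n-2"] n3
      by (auto split: if_splits)
    moreover have "2*n+1-3 = 2*n-2" by simp
    ultimately have "int p = (\<Sum>k\<in>{3..n}. int (b k))" using wt'[of 3] n3 by simp
    then show ?thesis by (simp flip: of_nat_sum)
  qed
  have w4: "\<forall>i\<in>{4..n}. (\<Sum>k\<in>{i..n}. b k) = 0"
  proof
    fix i assume i: "i \<in> {4..n}"
    have "count_list W i = 0" "count_list W (2*n+1-i) = 0" using cnt[of i] cnt[of "2*n+1-i"] i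
      by (auto split: if_splits)
    hence "int (\<Sum>k\<in>{i..n}. b k) = 0" using wt'[of i] i by simp
    then show "(\<Sum>k\<in>{i..n}. b k) = 0" by (simp only: of_nat_eq_0_iff)
  qed
  have w1n: "L1 = (\<Sum>k\<in>{1..n}. b k) + m + r" using w1 by linarith
  have w2n: "s2 = (\<Sum>k\<in>{2..n}. b k) + q" using w2 by linarith
  have "condD n a b m s2 p q r"
    unfolding condD_def L1_def[symmetric] L2_def[symmetric] L3_def[symmetric]
    using s2m c1 pqr c2 w1n w2n w3 w4 by simp
  then show ?thesis using X1r X2r X3r unfolding X1_def X2_def X3_def L1_def L2_def L3_def by blast
qed

end


definition condL :: "nat \<Rightarrow> (nat \<Rightarrow> nat) \<Rightarrow> (nat \<Rightarrow> nat) \<Rightarrow> nat \<Rightarrow> nat \<Rightarrow> nat \<Rightarrow> nat \<Rightarrow> bool" where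
  "condL n a b k x y z \<longleftrightarrow> k \<le> row_len n a 2 \<and> row_len n a 1 + x = (\<Sum>i\<in>{1..n}. b i) + k \<and>
     row_len n a 2 + y = (\<Sum>i\<in>{2..n}. b i) + k \<and> z = (\<Sum>i\<in>{3..n}. b i) \<and> x + y + z = row_len n a 3 \<and>
     x + y \<le> k \<and> z + k \<le> row_len n a 2 \<and> row_len n a 2 + y \<le> row_len n a 1 \<and>
     (\<forall>i\<in>{4..n}. (\<Sum>k\<in>{i..n}. b k) = 0)"

definition etaK :: "nat \<Rightarrow> nat \<Rightarrow> nat" where "etaK k = (\<lambda>i. if i = 2 then k else 0)"

lemma goodL_prefix: "dominant_word n w \<Longrightarrow> w = p @ s \<Longrightarrow> goodL n p"
  unfolding dominant_word_alt by (metis append_eq_conv_conj le_add1 length_append)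

lemma genL:
  assumes g: "goodL n (q @ s)" and v: "v \<in> set s" "\<forall>y\<in>set s. v \<le> y" "2 \<le> v" "v \<le> 2*n"
    and nq: "v - 1 \<notin> set q"
  shows False
proof -
  have i: "v - 1 \<in> {1..<2*n}" using v by auto
  hence "count_list (q @ s) (v - 1 + 1) \<le> count_list (q @ s) (v - 1)" using g unfolding goodL_def by blast
  moreover have "v - 1 \<notin> set s" using v by force
  moreover have "1 \<le> count_list (q @ s) v" using count_pos[OF v(1)] by simp
  moreover have "v - 1 + 1 = v" using v by simp
  ultimately show False using nq by simp
qed

context
  fixes n :: nat and a b :: "nat \<Rightarrow> nat"
  assumes n2: "n \<ge> 2" and hyp: "n = 2 \<or> (\<forall>i\<in>{4..2*n-1}. a i = 0)"
begin

lemma row_len_etaK: "row_len n (etaK k) r = (if r \<le> 2 then k else 0)"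
proof -
  have "row_len n (etaK k) r = (\<Sum>i\<in>{r..2*n-1}. if i = 2 then k else 0)"
    unfolding row_len_def etaK_def by simp
  also have "\<dots> = (if 2 \<in> {r..2*n-1} then k else 0)" by (rule sum.delta) simp
  finally show ?thesis using n2 by auto
qed

lemma eta_form:
  assumes "dom_weight n eta" "shape n eta \<subseteq> shape n a" "even_shape eta"
  shows "eta = etaK (eta 2) \<and> eta 2 \<le> row_len n a 2"
proof -
  have z: "eta i = 0" if "i \<noteq> 2" for i
  proof (cases "odd i \<or> i = 0 \<or> 2*n \<le> i")
    case True
    have d: "\<forall>i. (i = 0 \<or> 2*n \<le> i) \<longrightarrow> eta i = 0" using assms(1) unfolding dom_weight_def .
    have oz: "\<forall>i. odd i \<longrightarrow> eta i = 0" using assms(3) unfolding even_shape_def .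
    show ?thesis using d oz True by metis
  next
    case False
    hence ev: "even i" "i \<noteq> 0" "i < 2*n" by auto
    then obtain j where j: "i = 2*j" by (auto elim: evenE)
    have "j \<noteq> 0" "j \<noteq> 1" using ev j that by auto
    hence i: "4 \<le> i" "i \<le> 2*n-1" using j ev(3) by auto
    show ?thesis
    proof (rule ccontr)
      assume "eta i \<noteq> 0"
      moreover have "eta i \<le> row_len n eta i" unfolding row_len_def
        using i by (intro member_le_sum) auto
      ultimately have "(i,1) \<in> shape n eta" unfolding shape_def using i by auto
      hence "(i,1) \<in> shape n a" using assms(2) by blast
      then show False using L_zero[OF n2 hyp i(1)] unfolding shape_def by auto
    qed
  qed
  have e: "eta = etaK (eta 2)" unfolding etaK_def using z by auto
  define k where "k = eta 2"
  have e': "eta = etaK k" using e k_def by simp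
  have "k \<le> row_len n a 2"
  proof (cases "k = 0")
    case False
    have rl: "row_len n eta 2 = k" unfolding e' by (simp add: row_len_etaK)
    have "2 \<le> 2*n-1" using n2 by simp
    hence "(2, k) \<in> shape n eta" using rl False unfolding shape_def by auto
    hence "(2, k) \<in> shape n a" using assms(2) by blast
    then show ?thesis unfolding shape_def by auto
  qed simp
  hence "eta 2 \<le> row_len n a 2" using k_def by simp
  then show ?thesis using e by simp
qed

lemma skew_alt:
  assumes "k \<le> row_len n a 2"
  shows "shape n a - shape n (etaK k) = {(r,c). 1 \<le> r \<and> r \<le> 2*n-1 \<and> (if r \<le> 2 then k else 0) < c \<and> c \<le> row_len n a r}"
  unfolding shape_def row_len_etaK by auto

lemma word_skew:
  assumes "k \<le> row_len n a 2"
  shows "word_of n a (shape n a - shape n (etaK k)) T =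
     rev (map (\<lambda>c. T(1,c)) [k+1..<row_len n a 1+1]) @ rev (map (\<lambda>c. T(2,c)) [k+1..<row_len n a 2+1]) @
     rev (map (\<lambda>c. T(3,c)) [1..<row_len n a 3+1])"
proof -
  have "word_of n a (shape n a - shape n (etaK k)) T = concat (map (\<lambda>r. rev (map (\<lambda>c. T(r,c)) [(if r \<le> 2 then k else 0)+1..<row_len n a r+1])) [1..<(2*n-1)+1])"
    unfolding word_of_def skew_alt[OF assms]
    by (rule reading_word_gen) (auto intro: row_len_mono)
  also have "\<dots> = rev (map (\<lambda>c. T(1,c)) [(if (1::nat) \<le> 2 then k else 0)+1..<row_len n a 1+1]) @ rev (map (\<lambda>c. T(2,c)) [(if (2::nat) \<le> 2 then k else 0)+1..<row_len n a 2+1]) @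
     rev (map (\<lambda>c. T(3,c)) [(if (3::nat) \<le> 2 then k else 0)+1..<row_len n a 3+1])"
    by (rule concat3) (use n2 L_zero[OF n2 hyp] in \<open>auto simp del: upt_Suc\<close>)
  finally show ?thesis by simp
qed

lemma lr_struct:
  assumes eta: "dom_weight n eta" "shape n eta \<subseteq> shape n a" "even_shape eta" and T: "T \<in> LR n a eta b"
  shows "\<exists>k x y z. condL n a b k x y z \<and> eta = etaK k \<and>
    map (\<lambda>c. T(1,c)) [k+1..<row_len n a 1+1] = replicate (row_len n a 1 - k) 1 \<and>
    map (\<lambda>c. T(2,c)) [k+1..<row_len n a 2+1] = replicate (row_len n a 2 - k) 2 \<and>
    map (\<lambda>c. T(3,c)) [1..<row_len n a 3+1] = replicate x 1 @ replicate y 2 @ replicate z 3"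
proof -
  define k where "k = eta 2"
  have ek: "eta = etaK k" and kL: "k \<le> row_len n a 2" using eta_form[OF eta] k_def by auto
  define L1 where "L1 = row_len n a 1"
  define L2 where "L2 = row_len n a 2"
  define L3 where "L3 = row_len n a 3"
  define B where "B = shape n a - shape n (etaK k)"
  define Y1 where "Y1 = map (\<lambda>c. T(1,c)) [k+1..<L1+1]"
  define Y2 where "Y2 = map (\<lambda>c. T(2,c)) [k+1..<L2+1]"
  define Y3 where "Y3 = map (\<lambda>c. T(3,c)) [1..<L3+1]"
  define W where "W = word_of n a B T"
  have WY: "W = rev Y1 @ rev Y2 @ rev Y3"
    unfolding W_def B_def Y1_def Y2_def Y3_def L1_def L2_def L3_def using word_skew[OF kL] by simp
  have ss: "ss_filling n B T" and pre: "dominant_word n W"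
    and wt: "\<forall>i\<in>{1..2*n}. count_list W i = (if i \<le> n then (\<Sum>k\<in>{i..n}. b k) else 0)"
    using T unfolding LR_def W_def B_def ek by auto
  have L: "L2 \<le> L1" "L3 \<le> L2" "k \<le> L2" unfolding L1_def L2_def L3_def using kL by (auto intro: row_len_mono)
  have inB: "(r,c) \<in> B" if "r \<in> {1,2,3}" "(if r \<le> 2 then k else 0) < c" "c \<le> row_len n a r" for r c
    unfolding B_def skew_alt[OF kL] using that n2 by auto
  have bnd: "1 \<le> T(r,c) \<and> T(r,c) \<le> 2*n" if "r \<in> {1,2,3}" "(if r \<le> 2 then k else 0) < c" "c \<le> row_len n a r" for r c
    using ss inB[OF that] unfolding ss_filling_def by blast
  have mono: "T(r,c) \<le> T(r,c')" if "r \<in> {1,2,3}" "(if r \<le> 2 then k else 0) < c" "c \<le> c'" "c' \<le> row_len n a r" for r c c'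
  proof -
    have "(r,c) \<in> B" "(r,c') \<in> B" using inB that by auto
    then show ?thesis using ss that unfolding ss_filling_def by blast
  qed
  have col: "T(r,c) < T(r',c)" if "(r,c) \<in> B" "(r',c) \<in> B" "r < r'" for r r' c
    using ss that unfolding ss_filling_def by blast
  have r1: "T(1,c) = 1" if c: "k < c" "c \<le> L1" for c
  proof (rule ccontr)
    assume h: "T(1,c) \<noteq> 1"
    define s where "s = rev (map (\<lambda>c'. T(1,c')) [c..<L1+1])"
    have "rev Y1 = s @ rev (map (\<lambda>c'. T(1,c')) [k+1..<c])"
      unfolding Y1_def s_def using upt_add_eq_append[of "k+1" c "L1+1-c"] c by simp
    hence "W = ([] @ s) @ (rev (map (\<lambda>c'. T(1,c')) [k+1..<c]) @ rev Y2 @ rev Y3)" using WY by simp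
    hence g: "goodL n ([] @ s)" using goodL_prefix[OF pre] by blast
    have v: "T(1,c) \<in> set s" "\<forall>y\<in>set s. T(1,c) \<le> y" using c mono[of 1 c] unfolding s_def L1_def
      by (auto simp del: upt_Suc)
    have "1 \<le> T(1,c) \<and> T(1,c) \<le> 2*n" using bnd[of 1 c] c unfolding L1_def by auto
    hence "2 \<le> T(1,c)" "T(1,c) \<le> 2*n" using h by auto
    then show False using genL[OF g v] by simp
  qed
  have Y1r: "Y1 = replicate (L1 - k) 1"
  proof -
    have "Y1 = map (\<lambda>_. 1) [k+1..<L1+1]" unfolding Y1_def using r1 by (intro map_cong) auto
    then show ?thesis by (simp add: map_replicate_const del: upt_Suc)
  qed
  have r2: "T(2,c) = 2" if c: "k < c" "c \<le> L2" for c
  proof (rule ccontr)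
    assume h: "T(2,c) \<noteq> 2"
    define s where "s = rev (map (\<lambda>c'. T(2,c')) [c..<L2+1])"
    have "rev Y2 = s @ rev (map (\<lambda>c'. T(2,c')) [k+1..<c])"
      unfolding Y2_def s_def using upt_add_eq_append[of "k+1" c "L2+1-c"] c by simp
    hence "W = (rev Y1 @ s) @ (rev (map (\<lambda>c'. T(2,c')) [k+1..<c]) @ rev Y3)" using WY by simp
    hence g: "goodL n (rev Y1 @ s)" using goodL_prefix[OF pre] by blast
    have v: "T(2,c) \<in> set s" "\<forall>y\<in>set s. T(2,c) \<le> y" using c mono[of 2 c] unfolding s_def L2_def
      by (auto simp del: upt_Suc)
    have "T(1,c) < T(2,c)" using col[of 1 c 2] inB[of 1 c] inB[of 2 c] c L unfolding L1_def L2_def by auto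
    moreover have "T(1,c) = 1" using r1[of c] c L by auto
    moreover have "T(2,c) \<le> 2*n" using bnd[of 2 c] c unfolding L2_def by auto
    ultimately have hv: "3 \<le> T(2,c)" "T(2,c) \<le> 2*n" using h by auto
    have "T(2,c) - 1 \<notin> set (rev Y1)" using Y1r hv by auto
    moreover have "2 \<le> T(2,c)" using hv by simp
    ultimately show False using genL[OF g v _ hv(2)] by blast
  qed
  have Y2r: "Y2 = replicate (L2 - k) 2"
  proof -
    have "Y2 = map (\<lambda>_. 2) [k+1..<L2+1]" unfolding Y2_def using r2 by (intro map_cong) auto
    then show ?thesis by (simp add: map_replicate_const del: upt_Suc)
  qed
  have r3: "T(3,c) \<in> {1,2,3}" if c: "1 \<le> c" "c \<le> L3" for c
  proof (rule ccontr)
    assume h: "T(3,c) \<notin> {1,2,3}"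
    define s where "s = rev (map (\<lambda>c'. T(3,c')) [c..<L3+1])"
    have "rev Y3 = s @ rev (map (\<lambda>c'. T(3,c')) [1..<c])"
      unfolding Y3_def s_def using upt_split_at[of c L3] c by simp
    hence "W = ((rev Y1 @ rev Y2) @ s) @ rev (map (\<lambda>c'. T(3,c')) [1..<c])" using WY by simp
    hence g: "goodL n ((rev Y1 @ rev Y2) @ s)" using goodL_prefix[OF pre] by blast
    have v: "T(3,c) \<in> set s" "\<forall>y\<in>set s. T(3,c) \<le> y" using c mono[of 3 c] unfolding s_def L3_def
      by (auto simp del: upt_Suc)
    have "1 \<le> T(3,c) \<and> T(3,c) \<le> 2*n" using bnd[of 3 c] c unfolding L3_def by auto
    hence hv: "4 \<le> T(3,c)" "T(3,c) \<le> 2*n" using h by auto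
    have "T(3,c) - 1 \<notin> set (rev Y1 @ rev Y2)" using Y1r Y2r hv by auto
    moreover have "2 \<le> T(3,c)" using hv by simp
    ultimately show False using genL[OF g v _ hv(2)] by blast
  qed
  have sY3: "sorted Y3" unfolding Y3_def
    by (rule sorted_map_upt) (use mono[of 3] in \<open>auto simp: L3_def\<close>)
  have setY3: "set Y3 \<subseteq> {1,2,3}"
  proof
    fix y assume "y \<in> set Y3"
    then obtain c where "c \<in> {1..<L3+1}" "y = T(3,c)" unfolding Y3_def by (auto simp del: upt_Suc)
    then show "y \<in> {1,2,3}" using r3[of c] by auto
  qed
  obtain x y z where Y3r: "Y3 = replicate x 1 @ replicate y 2 @ replicate z 3"
    using sorted3[OF sY3 setY3] by force
  have xyz: "x + y + z = L3" using Y3r unfolding Y3_def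
    by (metis add.assoc length_append length_map length_replicate length_upt add_diff_cancel_right')
  have Wr: "W = replicate (L1 - k) 1 @ replicate (L2 - k) 2 @ (replicate z 3 @ replicate y 2 @ replicate x 1)"
    using WY Y1r Y2r Y3r by simp
  have c1: "x + y \<le> k"
  proof (rule ccontr)
    assume "\<not> x + y \<le> k"
    hence h: "k < x + y" by simp
    define c where "c = x + y"
    have c: "1 \<le> c" "c \<le> L3" "k < c" using h xyz unfolding c_def by auto
    have "T(3, c) = Y3 ! (c - 1)" unfolding Y3_def using nth_map_upt0[of c L3 "\<lambda>c. T(3,c)"] c by (simp del: upt_Suc)
    also have "\<dots> \<le> 2" using Y3r c unfolding c_def by (auto simp: nth_append)
    finally have t3: "T(3,c) \<le> 2" .
    have "T(2,c) < T(3,c)" using col[of 2 c 3] inB[of 2 c] inB[of 3 c] c L unfolding L2_def L3_def by auto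
    moreover have "T(2,c) = 2" using r2[of c] c L by auto
    ultimately show False using t3 by simp
  qed
  have c2: "z \<le> L2 - k"
  proof -
    have "W = (replicate (L1 - k) 1 @ replicate (L2 - k) 2 @ replicate z 3) @ (replicate y 2 @ replicate x 1)"
      using Wr by simp
    hence g: "goodL n (replicate (L1 - k) 1 @ replicate (L2 - k) 2 @ replicate z 3)"
      using goodL_prefix[OF pre] by blast
    have "2 \<in> {1..<2*n}" using n2 by auto
    hence "count_list (replicate (L1 - k) 1 @ replicate (L2 - k) 2 @ replicate z 3) ((2::nat)+1) \<le>
           count_list (replicate (L1 - k) 1 @ replicate (L2 - k) 2 @ replicate z 3) (2::nat)"
      using g unfolding goodL_def by blast
    then show ?thesis by simp
  qed
  have c3: "L2 - k + y \<le> L1 - k"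
  proof -
    have "W = (replicate (L1 - k) 1 @ replicate (L2 - k) 2 @ replicate z 3 @ replicate y 2) @ replicate x 1"
      using Wr by simp
    hence g: "goodL n (replicate (L1 - k) 1 @ replicate (L2 - k) 2 @ replicate z 3 @ replicate y 2)"
      using goodL_prefix[OF pre] by blast
    have "1 \<in> {1..<2*n}" using n2 by auto
    hence "count_list (replicate (L1 - k) 1 @ replicate (L2 - k) 2 @ replicate z 3 @ replicate y 2) ((1::nat)+1) \<le>
           count_list (replicate (L1 - k) 1 @ replicate (L2 - k) 2 @ replicate z 3 @ replicate y 2) (1::nat)"
      using g unfolding goodL_def by blast
    then show ?thesis by simp
  qed
  have cnt: "count_list W l = (if l = 1 then L1 - k + x else 0) + (if l = 2 then L2 - k + y else 0) + (if l = 3 then z else 0)" for l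
    using Wr by auto
  have wt': "count_list W i = (if i \<le> n then (\<Sum>k\<in>{i..n}. b k) else 0)" if "1 \<le> i" "i \<le> 2*n" for i
    using wt that by auto
  have w1: "L1 - k + x = (\<Sum>i\<in>{1..n}. b i)" using wt'[of 1] cnt[of 1] n2 by simp
  have w2: "L2 - k + y = (\<Sum>i\<in>{2..n}. b i)" using wt'[of 2] cnt[of 2] n2 by simp
  have w3: "z = (\<Sum>i\<in>{3..n}. b i)" using wt'[of 3] cnt[of 3] n2 by (cases "3 \<le> n") auto
  have w4: "\<forall>i\<in>{4..n}. (\<Sum>k\<in>{i..n}. b k) = 0"
  proof
    fix i assume i: "i \<in> {4..n}"
    have "count_list W i = 0" using cnt[of i] i by auto
    then show "(\<Sum>k\<in>{i..n}. b k) = 0" using wt'[of i] i by auto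
  qed
  have "condL n a b k x y z"
    unfolding condL_def L1_def[symmetric] L2_def[symmetric] L3_def[symmetric]
    using L c1 c2 c3 xyz w1 w2 w3 w4 by auto
  then show ?thesis using ek Y1r Y2r Y3r unfolding Y1_def Y2_def Y3_def L1_def L2_def L3_def by blast
qed

end


definition TD :: "nat \<Rightarrow> (nat \<Rightarrow> nat) \<Rightarrow> nat \<Rightarrow> nat \<Rightarrow> nat \<Rightarrow> nat \<Rightarrow> nat \<Rightarrow> nat \<times> nat \<Rightarrow> nat" where
  "TD n a m s2 p q r = (\<lambda>(r0,c).
     if r0 = 1 \<and> 1 \<le> c \<and> c \<le> row_len n a 1 then 1
     else if r0 = 2 \<and> 1 \<le> c \<and> c \<le> s2 then 2
     else if r0 = 2 \<and> s2 < c \<and> c \<le> row_len n a 2 then 2*n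
     else if r0 = 3 \<and> 1 \<le> c \<and> c \<le> p then 3
     else if r0 = 3 \<and> p < c \<and> c \<le> p + q then 2*n-1
     else if r0 = 3 \<and> p + q < c \<and> c \<le> row_len n a 3 then 2*n
     else 0)"

context
  fixes n :: nat and a b :: "nat \<Rightarrow> nat"
  assumes n2: "n \<ge> 2" and hyp: "n = 2 \<or> (\<forall>i\<in>{4..2*n-1}. a i = 0)"
begin

lemma hc_vals:
  assumes cnt: "\<And>l. count_list w l = (if l = 1 then A1 else 0) + (if l = 2 then A2 else 0) + (if l = 3 then A3 else 0)
     + (if l = 2*n-1 then A4 else 0) + (if l = 2*n then A5 else 0)"
  shows "hat_coef n w 1 = int A1 - int A5"
    "hat_coef n w 2 = int A2 - int A4 - (if n = 2 then int A3 else 0)"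
    "3 \<le> n \<Longrightarrow> hat_coef n w 3 = int A3"
    "4 \<le> i \<Longrightarrow> i \<le> n \<Longrightarrow> hat_coef n w i = 0"
proof -
  note nf = nf[OF n2 hyp]
  show "hat_coef n w 1 = int A1 - int A5" unfolding hat_coef_def using cnt[of 1] cnt[of "2*n"] by (simp add: nf)
  have e2: "2*n+1-2 = 2*n-1" by simp
  show "hat_coef n w 2 = int A2 - int A4 - (if n = 2 then int A3 else 0)"
  proof (cases "n = 2")
    case True then show ?thesis unfolding hat_coef_def using cnt[of 2] cnt[of 3] by simp
  next
    case False
    have "(2*n-1 = 3) = False" using False n2 by arith
    then show ?thesis unfolding hat_coef_def e2 using cnt[of 2] cnt[of "2*n-1"] False by (simp add: nf)
  qed
  show "hat_coef n w 3 = int A3" if n3: "3 \<le> n"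
  proof -
    have e3: "2*n+1-3 = 2*n-2" by simp
    have f: "(2*n-2 = 2) = False" "(2*n-1 = 3) = False" "(2*n - Suc 0 = 3) = False" using n3 by arith+
    show ?thesis unfolding hat_coef_def e3 using cnt[of 3] cnt[of "2*n-2"] by (simp add: nf f)
  qed
  show "hat_coef n w i = 0" if i: "4 \<le> i" "i \<le> n"
  proof -
    have "count_list w i = 0" "count_list w (2*n+1-i) = 0" using cnt[of i] cnt[of "2*n+1-i"] i
      by (auto split: if_splits)
    then show ?thesis unfolding hat_coef_def by simp
  qed
qed

lemma goodD_suff:
  assumes cnt: "\<And>l. count_list w l = (if l = 1 then A1 else 0) + (if l = 2 then A2 else 0) + (if l = 3 then A3 else 0)
     + (if l = 2*n-1 then A4 else 0) + (if l = 2*n then A5 else 0)"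
    and h: "n = 2 \<longrightarrow> A3 = 0" "int A2 - int A4 \<le> int A1 - int A5" "int A3 \<le> int A2 - int A4"
  shows "goodD n w"
  unfolding goodD_def
proof (intro conjI ballI)
  note hv = hc_vals[OF cnt]
  fix i assume i: "i \<in> {1..<n}"
  show "hat_coef n w (i + 1) \<le> hat_coef n w i"
  proof -
    consider "i = 1" | "i = 2" | "i = 3" | "4 \<le> i" using i by force
    then show ?thesis
    proof cases
      case 1
      have e: "hat_coef n w (i+1) = hat_coef n w 2" "hat_coef n w i = hat_coef n w 1" using 1 by (simp_all add: eval_nat_numeral)
      show ?thesis unfolding e using hv(1,2) h by (cases "n = 2") auto
    next
      case 2
      hence n3: "3 \<le> n" using i by auto
      have e: "hat_coef n w (i+1) = hat_coef n w 3" "hat_coef n w i = hat_coef n w 2" using 2 by (simp_all add: eval_nat_numeral)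
      show ?thesis unfolding e using n3 hv(2) hv(3)[OF n3] h by auto
    next
      case 3
      hence n3: "3 \<le> n" "4 \<le> n" using i by auto
      have e: "hat_coef n w (i+1) = hat_coef n w 4" "hat_coef n w i = hat_coef n w 3" using 3 by (simp_all add: eval_nat_numeral)
      show ?thesis unfolding e using hv(3)[OF n3(1)] hv(4)[of 4] n3 h by auto
    next
      case 4
      then show ?thesis using i hv(4)[of i] hv(4)[of "i+1"] by auto
    qed
  qed
next
  note hv = hc_vals[OF cnt]
  show "0 \<le> hat_coef n w n"
  proof -
    consider "n = 2" | "n = 3" | "4 \<le> n" using n2 by force
    then show ?thesis
    proof cases
      case 1 then show ?thesis using hv(2) h by auto
    next
      case 2 then show ?thesis using hv(3) h by auto
    next
      case 3 then show ?thesis using hv(4)[of n] by auto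
    qed
  qed
qed

lemma goodD6:
  assumes h: "n = 2 \<longrightarrow> A3 = 0" "int A2 - int A4 \<le> int A1 - int (A5 + A5')" "int A3 \<le> int A2 - int A4"
  shows "goodD n (replicate A1 1 @ replicate A5 (2*n) @ replicate A2 2 @ replicate A5' (2*n) @ replicate A4 (2*n-1) @ replicate A3 3)"
  by (rule goodD_suff[of _ A1 A2 A3 A4 "A5 + A5'"]) (use h in auto)

lemma hc6:
  "hat_coef n (replicate A1 1 @ replicate A5 (2*n) @ replicate A2 2 @ replicate A5' (2*n) @ replicate A4 (2*n-1) @ replicate A3 3) 1 = int A1 - int (A5 + A5')"
  "hat_coef n (replicate A1 1 @ replicate A5 (2*n) @ replicate A2 2 @ replicate A5' (2*n) @ replicate A4 (2*n-1) @ replicate A3 3) 2 = int A2 - int A4 - (if n = 2 then int A3 else 0)"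
  "3 \<le> n \<Longrightarrow> hat_coef n (replicate A1 1 @ replicate A5 (2*n) @ replicate A2 2 @ replicate A5' (2*n) @ replicate A4 (2*n-1) @ replicate A3 3) 3 = int A3"
  "4 \<le> i \<Longrightarrow> i \<le> n \<Longrightarrow> hat_coef n (replicate A1 1 @ replicate A5 (2*n) @ replicate A2 2 @ replicate A5' (2*n) @ replicate A4 (2*n-1) @ replicate A3 3) i = 0"
  by (rule hc_vals[of _ A1 A2 A3 A4 "A5 + A5'"]; auto)+

lemma td_in:
  assumes cd: "condD n a b m s2 p q r"
  shows "TD n a m s2 p q r \<in> domres_nu n a b"
proof -
  define L1 where "L1 = row_len n a 1"
  define L2 where "L2 = row_len n a 2"
  define L3 where "L3 = row_len n a 3"
  define T where "T = TD n a m s2 p q r"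
  have c: "s2 + m = L2" "L3 \<le> s2" "p + q + r = L3" "r + L2 \<le> L1" "L1 = (\<Sum>k\<in>{1..n}. b k) + m + r"
     "s2 = (\<Sum>k\<in>{2..n}. b k) + q" "p = (\<Sum>k\<in>{3..n}. b k)" "\<forall>i\<in>{4..n}. (\<Sum>k\<in>{i..n}. b k) = 0"
    using cd unfolding condD_def L1_def L2_def L3_def by auto
  have L: "L2 \<le> L1" "L3 \<le> L2" unfolding L1_def L2_def L3_def by (auto intro: row_len_mono)
  have p0: "n = 2 \<longrightarrow> p = 0" using c(7) by auto
  have inS: "(r0,c) \<in> shape n a \<longleftrightarrow> (r0 = 1 \<and> 1 \<le> c \<and> c \<le> L1) \<or> (r0 = 2 \<and> 1 \<le> c \<and> c \<le> L2) \<or> (r0 = 3 \<and> 1 \<le> c \<and> c \<le> L3)" for r0 c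
  proof
    assume h: "(r0,c) \<in> shape n a"
    hence "r0 \<le> 3" using L_zero[OF n2 hyp, of r0] unfolding shape_def by (cases "4 \<le> r0") auto
    then show "(r0 = 1 \<and> 1 \<le> c \<and> c \<le> L1) \<or> (r0 = 2 \<and> 1 \<le> c \<and> c \<le> L2) \<or> (r0 = 3 \<and> 1 \<le> c \<and> c \<le> L3)"
    proof -
      have "r0 = 1 \<or> r0 = 2 \<or> r0 = 3" using \<open>r0 \<le> 3\<close> h unfolding shape_def by auto
      then show ?thesis using h unfolding shape_def L1_def L2_def L3_def by auto
    qed
  next
    assume "(r0 = 1 \<and> 1 \<le> c \<and> c \<le> L1) \<or> (r0 = 2 \<and> 1 \<le> c \<and> c \<le> L2) \<or> (r0 = 3 \<and> 1 \<le> c \<and> c \<le> L3)"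
    then show "(r0,c) \<in> shape n a" unfolding shape_def L1_def L2_def L3_def using n2 by auto
  qed
  have t1: "T(1,c) = 1" if "1 \<le> c" "c \<le> L1" for c using that unfolding T_def TD_def L1_def by simp
  have t2a: "T(2,c) = 2" if "1 \<le> c" "c \<le> s2" for c using that unfolding T_def TD_def by simp
  have t2b: "T(2,c) = 2*n" if "s2 < c" "c \<le> L2" for c using that unfolding T_def TD_def L2_def by simp
  have t3a: "T(3,c) = 3" if "1 \<le> c" "c \<le> p" for c using that unfolding T_def TD_def by simp
  have t3b: "T(3,c) = 2*n-1" if "p < c" "c \<le> p + q" for c using that unfolding T_def TD_def by simp
  have t3c: "T(3,c) = 2*n" if "p + q < c" "c \<le> L3" for c using that unfolding T_def TD_def L3_def by simp
  have t0: "T x = 0" if "x \<notin> shape n a" for x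
  proof -
    obtain r0 c where x: "x = (r0,c)" by force
    have h: "\<not>(r0 = 1 \<and> 1 \<le> c \<and> c \<le> L1)" "\<not>(r0 = 2 \<and> 1 \<le> c \<and> c \<le> L2)" "\<not>(r0 = 3 \<and> 1 \<le> c \<and> c \<le> L3)"
      using that unfolding x inS by blast+
    have h2: "\<not>(r0 = 2 \<and> 1 \<le> c \<and> c \<le> s2)" "\<not>(r0 = 2 \<and> s2 < c \<and> c \<le> L2)"
      "\<not>(r0 = 3 \<and> 1 \<le> c \<and> c \<le> p)" "\<not>(r0 = 3 \<and> p < c \<and> c \<le> p + q)" "\<not>(r0 = 3 \<and> p + q < c \<and> c \<le> L3)"
      using h c by linarith+
    show ?thesis unfolding x T_def TD_def L1_def[symmetric] L2_def[symmetric] L3_def[symmetric]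
      using h(1) h2 by (simp only: case_prod_conv if_False)
  qed
  have r2v: "T(2,c) = (if c \<le> s2 then 2 else 2*n)" if "1 \<le> c" "c \<le> L2" for c
    using t2a t2b that by auto
  have r3v: "T(3,c) = (if c \<le> p then 3 else if c \<le> p + q then 2*n-1 else 2*n)" if "1 \<le> c" "c \<le> L3" for c
    using t3a t3b t3c that by auto
  have ss: "ss_filling n (shape n a) T"
    unfolding ss_filling_def
  proof (intro conjI allI impI ballI)
    fix x assume "x \<notin> shape n a" then show "T x = 0" by (rule t0)
  next
    fix x assume x: "x \<in> shape n a"
    obtain r0 c where xx: "x = (r0,c)" by force
    have "(r0 = 1 \<and> 1 \<le> c \<and> c \<le> L1) \<or> (r0 = 2 \<and> 1 \<le> c \<and> c \<le> L2) \<or> (r0 = 3 \<and> 1 \<le> c \<and> c \<le> L3)"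
      using x unfolding xx inS .
    then have "1 \<le> T(r0,c) \<and> T(r0,c) \<le> 2*n"
    proof (elim disjE conjE)
      assume "r0 = 1" "1 \<le> c" "c \<le> L1" then show ?thesis using t1[of c] n2 by simp
    next
      assume "r0 = 2" "1 \<le> c" "c \<le> L2" then show ?thesis using r2v[of c] n2 by simp
    next
      assume "r0 = 3" "1 \<le> c" "c \<le> L3" then show ?thesis using r3v[of c] n2 by auto
    qed
    then show "1 \<le> T x" "T x \<le> 2*n" unfolding xx by auto
  next
    fix r0 c c' assume h: "(r0,c) \<in> shape n a" "(r0,c') \<in> shape n a" "c \<le> c'"
    have "(r0 = 1 \<and> 1 \<le> c \<and> c \<le> L1) \<or> (r0 = 2 \<and> 1 \<le> c \<and> c \<le> L2) \<or> (r0 = 3 \<and> 1 \<le> c \<and> c \<le> L3)"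
      using h(1) unfolding inS .
    moreover have "(r0 = 1 \<and> 1 \<le> c' \<and> c' \<le> L1) \<or> (r0 = 2 \<and> 1 \<le> c' \<and> c' \<le> L2) \<or> (r0 = 3 \<and> 1 \<le> c' \<and> c' \<le> L3)"
      using h(2) unfolding inS .
    ultimately show "T(r0,c) \<le> T(r0,c')"
    proof (elim disjE conjE)
      assume "r0 = 1" "1 \<le> c" "c \<le> L1" "1 \<le> c'" "c' \<le> L1" then show ?thesis using t1 by simp
    next
      assume "r0 = 2" "1 \<le> c" "c \<le> L2" "1 \<le> c'" "c' \<le> L2" then show ?thesis using r2v[of c] r2v[of c'] h(3) n2 by simp
    next
      assume "r0 = 3" "1 \<le> c" "c \<le> L3" "1 \<le> c'" "c' \<le> L3" then show ?thesis using r3v[of c] r3v[of c'] h(3) n2 by auto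
    qed simp_all
  next
    fix r0 r' c assume h: "(r0,c) \<in> shape n a" "(r',c) \<in> shape n a" "r0 < r'"
    have "(r0 = 1 \<and> 1 \<le> c \<and> c \<le> L1) \<or> (r0 = 2 \<and> 1 \<le> c \<and> c \<le> L2) \<or> (r0 = 3 \<and> 1 \<le> c \<and> c \<le> L3)"
      using h(1) unfolding inS .
    moreover have "(r' = 1 \<and> 1 \<le> c \<and> c \<le> L1) \<or> (r' = 2 \<and> 1 \<le> c \<and> c \<le> L2) \<or> (r' = 3 \<and> 1 \<le> c \<and> c \<le> L3)"
      using h(2) unfolding inS .
    ultimately show "T(r0,c) < T(r',c)"
    proof (elim disjE conjE)
      assume "r0 = 1" "1 \<le> c" "c \<le> L1" "r' = 2" "c \<le> L2" then show ?thesis using t1[of c] r2v[of c] n2 by simp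
    next
      assume "r0 = 1" "1 \<le> c" "c \<le> L1" "r' = 3" "c \<le> L3" then show ?thesis using t1[of c] r3v[of c] n2 by auto
    next
      assume "r0 = 2" "1 \<le> c" "c \<le> L2" "r' = 3" "c \<le> L3" then show ?thesis using r2v[of c] r3v[of c] n2 c(2) by auto
    qed (use h(3) in simp_all)
  qed
  have row1: "map (\<lambda>c. T(1,c)) [1..<L1+1] = replicate L1 1"
    using map_piece[of 1 L1 "\<lambda>c. T(1,c)" 1] t1 by (simp add: add.commute)
  have row2: "map (\<lambda>c. T(2,c)) [1..<L2+1] = replicate s2 2 @ replicate m (2*n)"
  proof -
    have e: "L2 + 1 = 1 + s2 + m" using c(1) by simp
    have "[1..<L2+1] = [1..<1+s2+m]" by (simp only: e)
    then show ?thesis using map_split[of "\<lambda>c. T(2,c)" 1 s2 m] map_piece[of 1 s2 "\<lambda>c. T(2,c)" 2]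
      map_piece[of "1+s2" m "\<lambda>c. T(2,c)" "2*n"] t2a t2b c(1) by auto
  qed
  have row3: "map (\<lambda>c. T(3,c)) [1..<L3+1] = replicate p 3 @ replicate q (2*n-1) @ replicate r (2*n)"
  proof -
    have e: "L3 + 1 = 1 + p + (q + r)" using c(3) by simp
    have "[1..<L3+1] = [1..<1+p+(q+r)]" by (simp only: e)
    moreover have "map (\<lambda>c. T(3,c)) [1+p..<1+p+(q+r)] = replicate q (2*n-1) @ replicate r (2*n)"
      using map_split[of "\<lambda>c. T(3,c)" "1+p" q r] map_piece[of "1+p" q "\<lambda>c. T(3,c)" "2*n-1"]
      map_piece[of "1+p+q" r "\<lambda>c. T(3,c)" "2*n"] t3b t3c c(3) by (auto simp: add.assoc)
    ultimately show ?thesis using map_split[of "\<lambda>c. T(3,c)" 1 p "q+r"] map_piece[of 1 p "\<lambda>c. T(3,c)" 3] t3a by auto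
  qed
  have W: "word_of n a (shape n a) T = replicate L1 1 @ replicate m (2*n) @ replicate s2 2 @ replicate r (2*n) @ replicate q (2*n-1) @ replicate p 3"
    using word_shape[OF n2 hyp, of T] row1 row2 row3 unfolding L1_def L2_def L3_def by simp
  have f: "m \<le> L1" "s2 + m \<le> L1" "s2 + m + r \<le> L1" "q \<le> s2" "p + q \<le> s2" using c L by linarith+
  have g1: "goodD n (replicate L1 1)" using goodD6[of 0 0 0 L1 0 0] by simp
  have g2: "goodD n (replicate L1 1 @ replicate m (2*n))" using goodD6[of 0 0 0 L1 m 0] f by simp
  have g3: "goodD n (replicate L1 1 @ replicate m (2*n) @ replicate s2 2)" using goodD6[of 0 s2 0 L1 m 0] f by simp
  have g4: "goodD n (replicate L1 1 @ replicate m (2*n) @ replicate s2 2 @ replicate r (2*n))"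
    using goodD6[of 0 s2 0 L1 m r] f by simp
  have g5: "goodD n (replicate L1 1 @ replicate m (2*n) @ replicate s2 2 @ replicate r (2*n) @ replicate q (2*n-1))"
    using goodD6[of 0 s2 q L1 m r] f by simp
  have g6: "goodD n (replicate L1 1 @ replicate m (2*n) @ replicate s2 2 @ replicate r (2*n) @ replicate q (2*n-1) @ replicate p 3)"
    using goodD6[of p s2 q L1 m r] f p0 by simp
  have ag1: "allgoodD n (replicate L1 1)" using allgoodD_snoc[OF allgoodD_Nil, of n L1 1] g1 by simp
  have ag2: "allgoodD n (replicate L1 1 @ replicate m (2*n))"
    by (rule allgoodD_snoc[OF ag1]) (use g2 in simp)
  have ag3: "allgoodD n ((replicate L1 1 @ replicate m (2*n)) @ replicate s2 2)"
    by (rule allgoodD_snoc[OF ag2]) (use g3 in simp)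
  have ag4: "allgoodD n ((replicate L1 1 @ replicate m (2*n) @ replicate s2 2) @ replicate r (2*n))"
    by (rule allgoodD_snoc[OF ag3[unfolded append_assoc]]) (use g4 in simp)
  have ag5: "allgoodD n ((replicate L1 1 @ replicate m (2*n) @ replicate s2 2 @ replicate r (2*n)) @ replicate q (2*n-1))"
    by (rule allgoodD_snoc[OF ag4[unfolded append_assoc]]) (use g5 in simp)
  have ag6: "allgoodD n ((replicate L1 1 @ replicate m (2*n) @ replicate s2 2 @ replicate r (2*n) @ replicate q (2*n-1)) @ replicate p 3)"
    by (rule allgoodD_snoc[OF ag5[unfolded append_assoc]]) (use g6 in simp)
  have ag: "allgoodD n (replicate L1 1 @ replicate m (2*n) @ replicate s2 2 @ replicate r (2*n) @ replicate q (2*n-1) @ replicate p 3)"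
    using ag6 by simp
  have wt: "hat_coef n (word_of n a (shape n a) T) i = int (\<Sum>k\<in>{i..n}. b k)" if i: "i \<in> {1..n}" for i
  proof -
    consider "i = 1" | "i = 2" | "i = 3" | "4 \<le> i" using i by force
    then show ?thesis
    proof cases
      case 1 then show ?thesis unfolding W using hc6(1)[of L1 m s2 r q p] c by simp
    next
      case 2 then show ?thesis unfolding W using hc6(2)[of L1 m s2 r q p] c p0 by auto
    next
      case 3 then show ?thesis unfolding W using hc6(3)[of L1 m s2 r q p] c i by simp
    next
      case 4 then show ?thesis unfolding W using hc6(4)[of i L1 m s2 r q p] c i by simp
    qed
  qed
  have agW: "allgoodD n (word_of n a (shape n a) T)" unfolding W by (rule ag)
  have "T \<in> domres n a" unfolding domres_def
    using ss agW unfolding allgoodD_def goodD_def Let_def by blast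
  then show ?thesis unfolding domres_nu_def T_def[symmetric] using wt by blast
qed

end


definition TL :: "nat \<Rightarrow> (nat \<Rightarrow> nat) \<Rightarrow> nat \<Rightarrow> nat \<Rightarrow> nat \<Rightarrow> nat \<Rightarrow> nat \<times> nat \<Rightarrow> nat" where
  "TL n a k x y z = (\<lambda>(r0,c).
     if r0 = 1 \<and> k < c \<and> c \<le> row_len n a 1 then 1
     else if r0 = 2 \<and> k < c \<and> c \<le> row_len n a 2 then 2
     else if r0 = 3 \<and> 1 \<le> c \<and> c \<le> x then 1
     else if r0 = 3 \<and> x < c \<and> c \<le> x + y then 2
     else if r0 = 3 \<and> x + y < c \<and> c \<le> row_len n a 3 then 3
     else 0)"

lemma goodL_suff:
  assumes cnt: "\<And>l. count_list w l = (if l = 1 then A1 else 0) + (if l = 2 then A2 else 0) + (if l = 3 then A3 else 0)"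
    and h: "A2 \<le> A1" "A3 \<le> A2"
  shows "goodL n w"
  unfolding goodL_def
proof
  fix i assume i: "i \<in> {1..<2*n}"
  consider "i = 1" | "i = 2" | "3 \<le> i" using i by force
  then show "count_list w (i+1) \<le> count_list w i"
  proof cases
    case 1 then show ?thesis using cnt[of 1] cnt[of 2] h by (simp add: eval_nat_numeral)
  next
    case 2 then show ?thesis using cnt[of 2] cnt[of 3] h by (simp add: eval_nat_numeral)
  next
    case 3 then show ?thesis using cnt[of "i+1"] by simp
  qed
qed

lemma goodL5:
  assumes "A2 + A2' \<le> A1 + A1'" "A3 \<le> A2"
  shows "goodL n (replicate A1 1 @ replicate A2 2 @ replicate A3 3 @ replicate A2' 2 @ replicate A1' 1)"
  by (rule goodL_suff[of _ "A1 + A1'" "A2 + A2'" A3]) (use assms in auto)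

context
  fixes n :: nat and a b :: "nat \<Rightarrow> nat"
  assumes n2: "n \<ge> 2" and hyp: "n = 2 \<or> (\<forall>i\<in>{4..2*n-1}. a i = 0)"
begin

lemma etaK_ok:
  assumes "k \<le> row_len n a 2"
  shows "dom_weight n (etaK k) \<and> shape n (etaK k) \<subseteq> shape n a \<and> even_shape (etaK k)"
proof -
  have "dom_weight n (etaK k)" unfolding dom_weight_def etaK_def using n2 by auto
  moreover have "even_shape (etaK k)" unfolding even_shape_def etaK_def by auto
  moreover have "shape n (etaK k) \<subseteq> shape n a"
  proof
    fix x assume x: "x \<in> shape n (etaK k)"
    obtain r c where xx: "x = (r,c)" by force
    have h: "1 \<le> r" "r \<le> 2*n-1" "1 \<le> c" "c \<le> (if r \<le> 2 then k else 0)"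
      using x unfolding xx shape_def row_len_etaK[OF n2 hyp] by auto
    hence "r \<le> 2" by (cases "r \<le> 2") auto
    hence "row_len n a 2 \<le> row_len n a r" by (rule row_len_mono)
    then show "x \<in> shape n a" unfolding xx shape_def using h assms \<open>r \<le> 2\<close> by auto
  qed
  ultimately show ?thesis by blast
qed

lemma tl_in:
  assumes cl: "condL n a b k x y z"
  shows "TL n a k x y z \<in> LR n a (etaK k) b"
proof -
  define L1 where "L1 = row_len n a 1"
  define L2 where "L2 = row_len n a 2"
  define L3 where "L3 = row_len n a 3"
  define T where "T = TL n a k x y z"
  define B where "B = shape n a - shape n (etaK k)"
  have c: "k \<le> L2" "L1 + x = (\<Sum>i\<in>{1..n}. b i) + k" "L2 + y = (\<Sum>i\<in>{2..n}. b i) + k" "z = (\<Sum>i\<in>{3..n}. b i)"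
    "x + y + z = L3" "x + y \<le> k" "z + k \<le> L2" "L2 + y \<le> L1" "\<forall>i\<in>{4..n}. (\<Sum>k\<in>{i..n}. b k) = 0"
    using cl unfolding condL_def L1_def L2_def L3_def by auto
  have L: "L2 \<le> L1" "L3 \<le> L2" unfolding L1_def L2_def L3_def by (auto intro: row_len_mono)
  have kL: "k \<le> row_len n a 2" using c(1) unfolding L2_def .
  have inB: "(r0,c) \<in> B \<longleftrightarrow> (r0 = 1 \<and> k < c \<and> c \<le> L1) \<or> (r0 = 2 \<and> k < c \<and> c \<le> L2) \<or> (r0 = 3 \<and> 1 \<le> c \<and> c \<le> L3)" for r0 c
  proof
    assume h: "(r0,c) \<in> B"
    hence h': "1 \<le> r0" "r0 \<le> 2*n-1" "(if r0 \<le> 2 then k else 0) < c" "c \<le> row_len n a r0"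
      unfolding B_def skew_alt[OF n2 hyp kL] by auto
    hence "r0 \<le> 3" using L_zero[OF n2 hyp, of r0] by (cases "4 \<le> r0") auto
    hence "r0 = 1 \<or> r0 = 2 \<or> r0 = 3" using h' by auto
    then show "(r0 = 1 \<and> k < c \<and> c \<le> L1) \<or> (r0 = 2 \<and> k < c \<and> c \<le> L2) \<or> (r0 = 3 \<and> 1 \<le> c \<and> c \<le> L3)"
      using h' unfolding L1_def L2_def L3_def by auto
  next
    assume "(r0 = 1 \<and> k < c \<and> c \<le> L1) \<or> (r0 = 2 \<and> k < c \<and> c \<le> L2) \<or> (r0 = 3 \<and> 1 \<le> c \<and> c \<le> L3)"
    then show "(r0,c) \<in> B" unfolding B_def skew_alt[OF n2 hyp kL] L1_def L2_def L3_def using n2 by auto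
  qed
  have u1: "T(1,c) = 1" if "k < c" "c \<le> L1" for c using that unfolding T_def TL_def L1_def by simp
  have u2: "T(2,c) = 2" if "k < c" "c \<le> L2" for c using that unfolding T_def TL_def L2_def by simp
  have u3a: "T(3,c) = 1" if "1 \<le> c" "c \<le> x" for c using that unfolding T_def TL_def by simp
  have u3b: "T(3,c) = 2" if "x < c" "c \<le> x + y" for c using that unfolding T_def TL_def by simp
  have u3c: "T(3,c) = 3" if "x + y < c" "c \<le> L3" for c using that unfolding T_def TL_def L3_def by simp
  have r3v: "T(3,c) = (if c \<le> x then 1 else if c \<le> x + y then 2 else 3)" if "1 \<le> c" "c \<le> L3" for c
    using u3a u3b u3c that by auto
  have u0: "T w = 0" if "w \<notin> B" for w
  proof -
    obtain r0 c where w: "w = (r0,c)" by force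
    have h: "\<not>(r0 = 1 \<and> k < c \<and> c \<le> L1)" "\<not>(r0 = 2 \<and> k < c \<and> c \<le> L2)" "\<not>(r0 = 3 \<and> 1 \<le> c \<and> c \<le> L3)"
      using that unfolding w inB by blast+
    have h2: "\<not>(r0 = 3 \<and> 1 \<le> c \<and> c \<le> x)" "\<not>(r0 = 3 \<and> x < c \<and> c \<le> x + y)" "\<not>(r0 = 3 \<and> x + y < c \<and> c \<le> L3)"
      using h c by linarith+
    show ?thesis unfolding w T_def TL_def L1_def[symmetric] L2_def[symmetric] L3_def[symmetric]
      using h(1,2) h2 by (simp only: case_prod_conv if_False)
  qed
  have ss: "ss_filling n B T"
    unfolding ss_filling_def
  proof (intro conjI allI impI ballI)
    fix w assume "w \<notin> B" then show "T w = 0" by (rule u0)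
  next
    fix w assume w: "w \<in> B"
    obtain r0 c where ww: "w = (r0,c)" by force
    have "(r0 = 1 \<and> k < c \<and> c \<le> L1) \<or> (r0 = 2 \<and> k < c \<and> c \<le> L2) \<or> (r0 = 3 \<and> 1 \<le> c \<and> c \<le> L3)"
      using w unfolding ww inB .
    then have "1 \<le> T(r0,c) \<and> T(r0,c) \<le> 2*n"
    proof (elim disjE conjE)
      assume "r0 = 1" "k < c" "c \<le> L1" then show ?thesis using u1[of c] n2 by simp
    next
      assume "r0 = 2" "k < c" "c \<le> L2" then show ?thesis using u2[of c] n2 by simp
    next
      assume "r0 = 3" "1 \<le> c" "c \<le> L3" then show ?thesis using r3v[of c] n2 by auto
    qed
    then show "1 \<le> T w" "T w \<le> 2*n" unfolding ww by auto
  next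
    fix r0 c c' assume h: "(r0,c) \<in> B" "(r0,c') \<in> B" "c \<le> c'"
    have "(r0 = 1 \<and> k < c \<and> c \<le> L1) \<or> (r0 = 2 \<and> k < c \<and> c \<le> L2) \<or> (r0 = 3 \<and> 1 \<le> c \<and> c \<le> L3)"
      using h(1) unfolding inB .
    moreover have "(r0 = 1 \<and> k < c' \<and> c' \<le> L1) \<or> (r0 = 2 \<and> k < c' \<and> c' \<le> L2) \<or> (r0 = 3 \<and> 1 \<le> c' \<and> c' \<le> L3)"
      using h(2) unfolding inB .
    ultimately show "T(r0,c) \<le> T(r0,c')"
    proof (elim disjE conjE)
      assume "r0 = 1" "k < c" "c \<le> L1" "k < c'" "c' \<le> L1" then show ?thesis using u1 by simp
    next
      assume "r0 = 2" "k < c" "c \<le> L2" "k < c'" "c' \<le> L2" then show ?thesis using u2 by simp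
    next
      assume "r0 = 3" "1 \<le> c" "c \<le> L3" "1 \<le> c'" "c' \<le> L3" then show ?thesis using r3v[of c] r3v[of c'] h(3) by auto
    qed simp_all
  next
    fix r0 r' c assume h: "(r0,c) \<in> B" "(r',c) \<in> B" "r0 < r'"
    have "(r0 = 1 \<and> k < c \<and> c \<le> L1) \<or> (r0 = 2 \<and> k < c \<and> c \<le> L2) \<or> (r0 = 3 \<and> 1 \<le> c \<and> c \<le> L3)"
      using h(1) unfolding inB .
    moreover have "(r' = 1 \<and> k < c \<and> c \<le> L1) \<or> (r' = 2 \<and> k < c \<and> c \<le> L2) \<or> (r' = 3 \<and> 1 \<le> c \<and> c \<le> L3)"
      using h(2) unfolding inB .
    ultimately show "T(r0,c) < T(r',c)"
    proof (elim disjE conjE)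
      assume "r0 = 1" "k < c" "c \<le> L1" "r' = 2" "c \<le> L2" then show ?thesis using u1[of c] u2[of c] by simp
    next
      assume "r0 = 1" "k < c" "c \<le> L1" "r' = 3" "1 \<le> c" "c \<le> L3" then show ?thesis using u1[of c] r3v[of c] c(6) by auto
    next
      assume "r0 = 2" "k < c" "c \<le> L2" "r' = 3" "1 \<le> c" "c \<le> L3" then show ?thesis using u2[of c] r3v[of c] c(6) by auto
    qed (use h(3) in simp_all)
  qed
  have row1: "map (\<lambda>c. T(1,c)) [k+1..<L1+1] = replicate (L1 - k) 1"
  proof -
    have e: "L1 + 1 = (k + 1) + (L1 - k)" using c(1) L by simp
    show ?thesis unfolding e by (rule map_piece) (use u1 in auto)
  qed
  have row2: "map (\<lambda>c. T(2,c)) [k+1..<L2+1] = replicate (L2 - k) 2"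
  proof -
    have e: "L2 + 1 = (k + 1) + (L2 - k)" using c(1) by simp
    show ?thesis unfolding e by (rule map_piece) (use u2 in auto)
  qed
  have row3: "map (\<lambda>c. T(3,c)) [1..<L3+1] = replicate x 1 @ replicate y 2 @ replicate z 3"
  proof -
    have e: "L3 + 1 = 1 + x + (y + z)" using c(5) by simp
    have "map (\<lambda>c. T(3,c)) [1+x..<1+x+(y+z)] = replicate y 2 @ replicate z 3"
      using map_split[of "\<lambda>c. T(3,c)" "1+x" y z] map_piece[of "1+x" y "\<lambda>c. T(3,c)" 2]
      map_piece[of "1+x+y" z "\<lambda>c. T(3,c)" 3] u3b u3c c(5) by (auto simp: add.assoc)
    then show ?thesis unfolding e using map_split[of "\<lambda>c. T(3,c)" 1 x "y+z"] map_piece[of 1 x "\<lambda>c. T(3,c)" 1] u3a by auto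
  qed
  have W: "word_of n a B T = replicate (L1 - k) 1 @ replicate (L2 - k) 2 @ replicate z 3 @ replicate y 2 @ replicate x 1"
    using word_skew[OF n2 hyp kL, of T] row1 row2 row3 unfolding B_def L1_def L2_def L3_def by simp
  have f: "L2 - k \<le> L1 - k" "z \<le> L2 - k" "L2 - k + y \<le> L1 - k" using c L by linarith+
  have g1: "goodL n (replicate (L1 - k) 1)" using goodL5[of 0 0 "L1 - k" 0 0 n] by simp
  have g2: "goodL n (replicate (L1 - k) 1 @ replicate (L2 - k) 2)" using goodL5[of "L2 - k" 0 "L1 - k" 0 0 n] f by simp
  have g3: "goodL n (replicate (L1 - k) 1 @ replicate (L2 - k) 2 @ replicate z 3)"
    using goodL5[of "L2 - k" 0 "L1 - k" 0 z n] f by simp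
  have g4: "goodL n (replicate (L1 - k) 1 @ replicate (L2 - k) 2 @ replicate z 3 @ replicate y 2)"
    using goodL5[of "L2 - k" y "L1 - k" 0 z n] f by simp
  have g5: "goodL n (replicate (L1 - k) 1 @ replicate (L2 - k) 2 @ replicate z 3 @ replicate y 2 @ replicate x 1)"
    using goodL5[of "L2 - k" y "L1 - k" x z n] f by simp
  have ag1: "dominant_word n (replicate (L1 - k) 1)" using dominant_snoc[OF dominant_Nil, of n "L1 - k" 1] g1 by simp
  have ag2: "dominant_word n (replicate (L1 - k) 1 @ replicate (L2 - k) 2)"
    by (rule dominant_snoc[OF ag1]) (use g2 in simp)
  have ag3: "dominant_word n ((replicate (L1 - k) 1 @ replicate (L2 - k) 2) @ replicate z 3)"
    by (rule dominant_snoc[OF ag2]) (use g3 in simp)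
  have ag4: "dominant_word n ((replicate (L1 - k) 1 @ replicate (L2 - k) 2 @ replicate z 3) @ replicate y 2)"
    by (rule dominant_snoc[OF ag3[unfolded append_assoc]]) (use g4 in simp)
  have ag5: "dominant_word n ((replicate (L1 - k) 1 @ replicate (L2 - k) 2 @ replicate z 3 @ replicate y 2) @ replicate x 1)"
    by (rule dominant_snoc[OF ag4[unfolded append_assoc]]) (use g5 in simp)
  have agW: "dominant_word n (word_of n a B T)" unfolding W using ag5 by simp
  have cntW: "count_list (word_of n a B T) l = (if l = 1 then L1 - k + x else 0) + (if l = 2 then L2 - k + y else 0) + (if l = 3 then z else 0)" for l
    unfolding W by auto
  have wt: "count_list (word_of n a B T) i = (if i \<le> n then (\<Sum>k\<in>{i..n}. b k) else 0)" if i: "i \<in> {1..2*n}" for i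
  proof -
    consider "i = 1" | "i = 2" | "i = 3" | "4 \<le> i" using i by force
    then show ?thesis
    proof cases
      case 1 then show ?thesis using cntW[of 1] c L n2 by simp
    next
      case 2 then show ?thesis using cntW[of 2] c L n2 by simp
    next
      case 3 then show ?thesis using cntW[of 3] c(4) n2 by (cases "n = 2") auto
    next
      case 4
      have "count_list (word_of n a B T) i = 0" using cntW[of i] 4 by simp
      then show ?thesis using c(9) 4 by auto
    qed
  qed
  show ?thesis unfolding LR_def B_def[symmetric] T_def[symmetric] using ss agW wt by blast
qed

end


lemma map_upt_eq_pt:
  assumes "map f [lo+1..<hi+1] = map g [lo+1..<hi+1]" "lo < c" "c \<le> hi"
  shows "f c = g c"
proof -
  have "c \<in> set [lo+1..<hi+1]" using assms(2,3) by (simp del: upt_Suc)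
  then show ?thesis using assms(1) by (simp only: map_eq_conv)
qed

context
  fixes n :: nat and a b :: "nat \<Rightarrow> nat"
  assumes n2: "n \<ge> 2" and hyp: "n = 2 \<or> (\<forall>i\<in>{4..2*n-1}. a i = 0)"
begin

lemma shape_rows: "(r0,c) \<in> shape n a \<Longrightarrow> (r0 = 1 \<or> r0 = 2 \<or> r0 = 3) \<and> 0 < c \<and> c \<le> row_len n a r0"
proof -
  assume h: "(r0,c) \<in> shape n a"
  hence h': "1 \<le> r0" "1 \<le> c" "c \<le> row_len n a r0" unfolding shape_def by auto
  hence "r0 \<le> 3" using L_zero[OF n2 hyp, of r0] by (cases "4 \<le> r0") auto
  then show ?thesis using h' by auto
qed

lemma D_unique:
  assumes "T1 \<in> domres_nu n a b" "T2 \<in> domres_nu n a b"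
  shows "T1 = T2"
proof -
  obtain m s2 p q r where c1: "condD n a b m s2 p q r"
    and a1: "map (\<lambda>c. T1(1,c)) [0+1..<row_len n a 1+1] = replicate (row_len n a 1) 1"
    and b1: "map (\<lambda>c. T1(2,c)) [0+1..<row_len n a 2+1] = replicate s2 2 @ replicate m (2*n)"
    and d1: "map (\<lambda>c. T1(3,c)) [0+1..<row_len n a 3+1] = replicate p 3 @ replicate q (2*n-1) @ replicate r (2*n)"
    using domres_struct[OF n2 hyp assms(1)] by auto
  obtain m' s2' p' q' r' where c2: "condD n a b m' s2' p' q' r'"
    and a2: "map (\<lambda>c. T2(1,c)) [0+1..<row_len n a 1+1] = replicate (row_len n a 1) 1"
    and b2: "map (\<lambda>c. T2(2,c)) [0+1..<row_len n a 2+1] = replicate s2' 2 @ replicate m' (2*n)"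
    and d2: "map (\<lambda>c. T2(3,c)) [0+1..<row_len n a 3+1] = replicate p' 3 @ replicate q' (2*n-1) @ replicate r' (2*n)"
    using domres_struct[OF n2 hyp assms(2)] by auto
  have eq: "m = m'" "s2 = s2'" "p = p'" "q = q'" "r = r'" using c1 c2 unfolding condD_def by linarith+
  have ss1: "ss_filling n (shape n a) T1" and ss2: "ss_filling n (shape n a) T2"
    using assms unfolding domres_nu_def domres_def by auto
  show ?thesis
  proof
    fix w :: "nat \<times> nat"
    obtain r0 c where w: "w = (r0,c)" by force
    show "T1 w = T2 w"
    proof (cases "w \<in> shape n a")
      case False
      have "\<forall>x. x \<notin> shape n a \<longrightarrow> T1 x = 0" "\<forall>x. x \<notin> shape n a \<longrightarrow> T2 x = 0"
        using ss1 ss2 unfolding ss_filling_def by blast+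
      then show ?thesis using False by metis
    next
      case True
      hence h: "(r0 = 1 \<or> r0 = 2 \<or> r0 = 3) \<and> 0 < c \<and> c \<le> row_len n a r0" using shape_rows w by auto
      then show ?thesis unfolding w
      proof (elim conjE disjE)
        assume h0: "r0 = 1" "0 < c" "c \<le> row_len n a r0"
        have mp: "map (\<lambda>c. T1(1,c)) [0+1..<row_len n a 1+1] = map (\<lambda>c. T2(1,c)) [0+1..<row_len n a 1+1]"
          using a1 a2 by (simp del: upt_Suc)
        have "T1(1,c) = T2(1,c)" by (rule map_upt_eq_pt[OF mp]) (use h0 in simp_all)
        then show "T1 (r0,c) = T2 (r0,c)" using h0 by simp
      next
        assume h0: "r0 = 2" "0 < c" "c \<le> row_len n a r0"
        have mp: "map (\<lambda>c. T1(2,c)) [0+1..<row_len n a 2+1] = map (\<lambda>c. T2(2,c)) [0+1..<row_len n a 2+1]"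
          using b1 b2 eq by (simp del: upt_Suc)
        have "T1(2,c) = T2(2,c)" by (rule map_upt_eq_pt[OF mp]) (use h0 in simp_all)
        then show "T1 (r0,c) = T2 (r0,c)" using h0 by simp
      next
        assume h0: "r0 = 3" "0 < c" "c \<le> row_len n a r0"
        have mp: "map (\<lambda>c. T1(3,c)) [0+1..<row_len n a 3+1] = map (\<lambda>c. T2(3,c)) [0+1..<row_len n a 3+1]"
          using d1 d2 eq by (simp del: upt_Suc)
        have "T1(3,c) = T2(3,c)" by (rule map_upt_eq_pt[OF mp]) (use h0 in simp_all)
        then show "T1 (r0,c) = T2 (r0,c)" using h0 by simp
      qed
    qed
  qed
qed

abbreviation LS where "LS \<equiv> (\<Union>eta\<in>{eta. dom_weight n eta \<and> shape n eta \<subseteq> shape n a \<and> even_shape eta}. LR n a eta b)"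

lemma skew_rows:
  assumes "k \<le> row_len n a 2" "(r0,c) \<in> shape n a - shape n (etaK k)"
  shows "(r0 = 1 \<and> k < c \<and> c \<le> row_len n a 1) \<or> (r0 = 2 \<and> k < c \<and> c \<le> row_len n a 2) \<or> (r0 = 3 \<and> 0 < c \<and> c \<le> row_len n a 3)"
proof -
  have h': "1 \<le> r0" "(if r0 \<le> 2 then k else 0) < c" "c \<le> row_len n a r0"
    using assms(2) unfolding skew_alt[OF n2 hyp assms(1)] by auto
  hence "r0 \<le> 3" using L_zero[OF n2 hyp, of r0] by (cases "4 \<le> r0") auto
  hence "r0 = 1 \<or> r0 = 2 \<or> r0 = 3" using h' by auto
  then show ?thesis using h' by auto
qed

lemma L_unique:
  assumes "T1 \<in> LS" "T2 \<in> LS"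
  shows "T1 = T2"
proof -
  obtain eta1 where e1: "dom_weight n eta1" "shape n eta1 \<subseteq> shape n a" "even_shape eta1" "T1 \<in> LR n a eta1 b"
    using assms(1) by blast
  obtain eta2 where e2: "dom_weight n eta2" "shape n eta2 \<subseteq> shape n a" "even_shape eta2" "T2 \<in> LR n a eta2 b"
    using assms(2) by blast
  obtain k x y z where c1: "condL n a b k x y z" and k1: "eta1 = etaK k"
    and a1: "map (\<lambda>c. T1(1,c)) [k+1..<row_len n a 1+1] = replicate (row_len n a 1 - k) 1"
    and b1: "map (\<lambda>c. T1(2,c)) [k+1..<row_len n a 2+1] = replicate (row_len n a 2 - k) 2"
    and d1: "map (\<lambda>c. T1(3,c)) [0+1..<row_len n a 3+1] = replicate x 1 @ replicate y 2 @ replicate z 3"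
    using lr_struct[OF n2 hyp e1] by auto
  obtain k' x' y' z' where c2: "condL n a b k' x' y' z'" and k2: "eta2 = etaK k'"
    and a2: "map (\<lambda>c. T2(1,c)) [k'+1..<row_len n a 1+1] = replicate (row_len n a 1 - k') 1"
    and b2: "map (\<lambda>c. T2(2,c)) [k'+1..<row_len n a 2+1] = replicate (row_len n a 2 - k') 2"
    and d2: "map (\<lambda>c. T2(3,c)) [0+1..<row_len n a 3+1] = replicate x' 1 @ replicate y' 2 @ replicate z' 3"
    using lr_struct[OF n2 hyp e2] by auto
  have eq: "k = k'" "x = x'" "y = y'" "z = z'" using c1 c2 unfolding condL_def by linarith+
  have kL: "k \<le> row_len n a 2" using c1 unfolding condL_def by simp
  have ss1: "ss_filling n (shape n a - shape n (etaK k)) T1" using e1(4) k1 unfolding LR_def by auto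
  have ss2: "ss_filling n (shape n a - shape n (etaK k)) T2" using e2(4) k2 eq unfolding LR_def by auto
  show ?thesis
  proof
    fix w :: "nat \<times> nat"
    obtain r0 c where w: "w = (r0,c)" by force
    show "T1 w = T2 w"
    proof (cases "w \<in> shape n a - shape n (etaK k)")
      case False
      have "\<forall>x. x \<notin> shape n a - shape n (etaK k) \<longrightarrow> T1 x = 0" "\<forall>x. x \<notin> shape n a - shape n (etaK k) \<longrightarrow> T2 x = 0"
        using ss1 ss2 unfolding ss_filling_def by blast+
      then show ?thesis using False by metis
    next
      case True
      hence h: "(r0 = 1 \<and> k < c \<and> c \<le> row_len n a 1) \<or> (r0 = 2 \<and> k < c \<and> c \<le> row_len n a 2) \<or> (r0 = 3 \<and> 0 < c \<and> c \<le> row_len n a 3)"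
        using skew_rows[OF kL] w by auto
      then show ?thesis unfolding w
      proof (elim conjE disjE)
        assume h0: "r0 = 1" "k < c" "c \<le> row_len n a 1"
        have mp: "map (\<lambda>c. T1(1,c)) [k+1..<row_len n a 1+1] = map (\<lambda>c. T2(1,c)) [k+1..<row_len n a 1+1]"
          using a1 a2 eq by (simp del: upt_Suc)
        have "T1(1,c) = T2(1,c)" by (rule map_upt_eq_pt[OF mp]) (use h0 in simp_all)
        then show "T1 (r0,c) = T2 (r0,c)" using h0 by simp
      next
        assume h0: "r0 = 2" "k < c" "c \<le> row_len n a 2"
        have mp: "map (\<lambda>c. T1(2,c)) [k+1..<row_len n a 2+1] = map (\<lambda>c. T2(2,c)) [k+1..<row_len n a 2+1]"
          using b1 b2 eq by (simp del: upt_Suc)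
        have "T1(2,c) = T2(2,c)" by (rule map_upt_eq_pt[OF mp]) (use h0 in simp_all)
        then show "T1 (r0,c) = T2 (r0,c)" using h0 by simp
      next
        assume h0: "r0 = 3" "0 < c" "c \<le> row_len n a 3"
        have mp: "map (\<lambda>c. T1(3,c)) [0+1..<row_len n a 3+1] = map (\<lambda>c. T2(3,c)) [0+1..<row_len n a 3+1]"
          using d1 d2 eq by (simp del: upt_Suc)
        have "T1(3,c) = T2(3,c)" by (rule map_upt_eq_pt[OF mp]) (use h0 in simp_all)
        then show "T1 (r0,c) = T2 (r0,c)" using h0 by simp
      qed
    qed
  qed
qed

lemma D_to_L:
  assumes "T \<in> domres_nu n a b"
  shows "LS \<noteq> {}"
proof -
  obtain m s2 p q r where c: "condD n a b m s2 p q r"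
    using domres_struct[OF n2 hyp assms] by auto
  have f: "s2 + m = row_len n a 2" "row_len n a 3 \<le> s2" "p + q + r = row_len n a 3"
     "r + row_len n a 2 \<le> row_len n a 1" "row_len n a 1 = (\<Sum>k\<in>{1..n}. b k) + m + r"
     "s2 = (\<Sum>k\<in>{2..n}. b k) + q" "p = (\<Sum>k\<in>{3..n}. b k)" "\<forall>i\<in>{4..n}. (\<Sum>k\<in>{i..n}. b k) = 0"
    using c unfolding condD_def by blast+
  have cl: "condL n a b (m+q+r) q r p" unfolding condL_def
    by (intro conjI; (rule f(7) f(8))?; use f in linarith)
  have kL: "m+q+r \<le> row_len n a 2" using cl unfolding condL_def by simp
  have "TL n a (m+q+r) q r p \<in> LR n a (etaK (m+q+r)) b" by (rule tl_in[OF n2 hyp cl])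
  then show ?thesis using etaK_ok[OF n2 hyp kL] by blast
qed

lemma L_to_D:
  assumes "T \<in> LS"
  shows "domres_nu n a b \<noteq> {}"
proof -
  obtain eta where e: "dom_weight n eta" "shape n eta \<subseteq> shape n a" "even_shape eta" "T \<in> LR n a eta b"
    using assms by blast
  obtain k x y z where c: "condL n a b k x y z"
    using lr_struct[OF n2 hyp e] by auto
  have f: "k \<le> row_len n a 2" "row_len n a 1 + x = (\<Sum>i\<in>{1..n}. b i) + k"
     "row_len n a 2 + y = (\<Sum>i\<in>{2..n}. b i) + k" "z = (\<Sum>i\<in>{3..n}. b i)" "x + y + z = row_len n a 3"
     "x + y \<le> k" "z + k \<le> row_len n a 2" "row_len n a 2 + y \<le> row_len n a 1"
     "\<forall>i\<in>{4..n}. (\<Sum>k\<in>{i..n}. b k) = 0"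
    using c unfolding condL_def by blast+
  obtain m where m: "k = m + x + y" using f(6) by (metis add.commute le_add_diff_inverse add.assoc)
  obtain s2 where s2: "row_len n a 2 = s2 + m" using f(1) m by (metis add.commute le_add1 le_add_diff_inverse le_trans add.assoc)
  have cd: "condD n a b m s2 z x y" unfolding condD_def
    by (intro conjI; (rule f(4) f(9))?; use f m s2 in linarith)
  show ?thesis using td_in[OF n2 hyp cd] by blast
qed

end

lemma bij_aux:
  assumes "\<And>x. x \<in> A \<Longrightarrow> B \<noteq> {}" "\<And>y. y \<in> B \<Longrightarrow> A \<noteq> {}"
    "\<And>x y. x \<in> A \<Longrightarrow> y \<in> A \<Longrightarrow> x = y" "\<And>x y. x \<in> B \<Longrightarrow> y \<in> B \<Longrightarrow> x = y"
  shows "\<exists>f. bij_betw f A B"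
proof (cases "A = {}")
  case True
  hence "B = {}" using assms(2) by blast
  then have "bij_betw (\<lambda>_. undefined) A B" using True by (simp add: bij_betw_def)
  then show ?thesis by blast
next
  case False
  then obtain d where d: "d \<in> A" by blast
  then obtain l where l: "l \<in> B" using assms(1) by blast
  have "A = {d}" using d assms(3) by blast
  moreover have "B = {l}" using l assms(4) by blast
  moreover have "bij_betw (\<lambda>_. l) {d} {l}" by (simp add: bij_betw_def)
  ultimately show ?thesis by blast
qed

theorem proposition6p6:
  fixes n :: nat and a b :: "nat \<Rightarrow> nat"
  assumes "n \<ge> 2"
    and "n = 2 \<or> (\<forall>i\<in>{4..2*n-1}. a i = 0)"
  shows "\<exists>f. bij_betw f (domres_nu n a b)
           (\<Union>eta\<in>{eta. dom_weight n eta \<and> shape n eta \<subseteq> shape n a \<and> even_shape eta}.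
              LR n a eta b)"
  by (rule bij_aux[OF D_to_L[OF assms] L_to_D[OF assms] D_unique[OF assms] L_unique[OF assms]])


end
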